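(* Let $G = N \rtimes H$ with $N,H$ finite abelian, let $\mathcal{O}_\alpha$ be an $H$-orbit in $P_N$ with stabilizer $H_\alpha$ and $c_\alpha = |\mathcal{O}_\alpha| = [H:H_\alpha]$, and let $u_p$ be an element of the idempotent eigenbasis of $\mathbb{C}[H_\alpha]$. Fix $v_1 \in \mathcal{O}_\alpha$, choose representatives $h_1,\dots,h_{c_\alpha}$ of the cosets of $H_\alpha$ in $H$, put $v_i = h_iv_1h_i^{-1}$ (so $\mathcal{O}_\alpha = \{v_1,\dots,v_{c_\alpha}\}$), $w_i = v_iu_p$, and $e_{ij} = w_i h_ih_j^{-1} w_j$. Then $e_{ij}e_{jk} = e_{ik}$, $e_{ij}e_{kl}=0$ for $j\ne k$, and $e_{ij}\mapsto E_{ij}$ defines an algebra isomorphism of the block $A = \mathbb{C}[G]J^{[\alpha]}_p$, where $J^{[\alpha]}_p = \sum_{i=1}^{c_\alpha} w_i$, with $\mathbb{M}_{c_\alpha}(\mathbb{C})$.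
   Context: $N$ is normal in $G$, $H$ acts on $N$ by conjugation. For a finite abelian group $K$, the idempotent eigenbasis of $\mathbb{C}[K]$ is the unique basis of $\mathbb{C}[K]$ consisting of simultaneous eigenvectors of left multiplication by elements of $\mathbb{C}[K]$ and consisting of pairwise orthogonal idempotents. $P_N$ is the idempotent eigenbasis of $\mathbb{C}[N]$, permuted by conjugation by $H$; $H_\alpha$ is the common stabilizer of the elements of $\mathcal{O}_\alpha$. $E_{ij}$ is the elementary $c_\alpha\times c_\alpha$ matrix with $1$ in position $(i,j)$. *)

theory Defs
  imports "HOL-Algebra.Coset" "Jordan_Normal_Form.Matrix"
begin

text \<open>Complex group algebra of a finite group G, realised as complex-valued
functions on the carrier of G (zero outside), with convolution product.\<close>

definition ga_sub :: "('g, 'b) monoid_scheme \<Rightarrow> 'g set \<Rightarrow> ('g \<Rightarrow> complex) set" where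
  "ga_sub G K = {a. \<forall>x. x \<notin> K \<longrightarrow> a x = 0}"

definition ga_mult :: "('g, 'b) monoid_scheme \<Rightarrow> ('g \<Rightarrow> complex) \<Rightarrow> ('g \<Rightarrow> complex) \<Rightarrow> ('g \<Rightarrow> complex)" where
  "ga_mult G a b = (\<lambda>x. if x \<in> carrier G
      then (\<Sum>y\<in>carrier G. a y * b (inv\<^bsub>G\<^esub> y \<otimes>\<^bsub>G\<^esub> x)) else 0)"

definition ga_delta :: "('g, 'b) monoid_scheme \<Rightarrow> 'g \<Rightarrow> ('g \<Rightarrow> complex)" where
  "ga_delta G g = (\<lambda>x. if x = g then 1 else 0)"

definition ga_conj :: "('g, 'b) monoid_scheme \<Rightarrow> 'g \<Rightarrow> ('g \<Rightarrow> complex) \<Rightarrow> ('g \<Rightarrow> complex)" where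
  "ga_conj G h a = ga_mult G (ga_mult G (ga_delta G h) a) (ga_delta G (inv\<^bsub>G\<^esub> h))"

definition ga_basis :: "('g, 'b) monoid_scheme \<Rightarrow> 'g set \<Rightarrow> ('g \<Rightarrow> complex) set \<Rightarrow> bool" where
  "ga_basis G K B \<longleftrightarrow> finite B \<and> B \<subseteq> ga_sub G K \<and>
     (\<forall>f. (\<lambda>x. \<Sum>b\<in>B. f b * b x) = (\<lambda>x. 0) \<longrightarrow> (\<forall>b\<in>B. f b = 0)) \<and>
     (\<forall>a\<in>ga_sub G K. \<exists>f. a = (\<lambda>x. \<Sum>b\<in>B. f b * b x))"

definition idem_eigenbasis :: "('g, 'b) monoid_scheme \<Rightarrow> 'g set \<Rightarrow> ('g \<Rightarrow> complex) set" where
  "idem_eigenbasis G K = (THE B. ga_basis G K B \<and>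
     (\<forall>b\<in>B. \<forall>a\<in>ga_sub G K. \<exists>\<mu>. ga_mult G a b = (\<lambda>x. \<mu> * b x)) \<and>
     (\<forall>b\<in>B. ga_mult G b b = b) \<and>
     (\<forall>b\<in>B. \<forall>b'\<in>B. b \<noteq> b' \<longrightarrow> ga_mult G b b' = (\<lambda>x. 0)))"

definition elem_mat :: "nat \<Rightarrow> nat \<Rightarrow> nat \<Rightarrow> complex mat" where
  "elem_mat c i j = mat c c (\<lambda>(k, l). if k = i \<and> l = j then 1 else 0)"

end

theory Submission
  imports Defs "HOL-Algebra.Multiplicative_Group"
begin

locale fgrp = group G for G :: "('g, 'b) monoid_scheme" (structure) +
  assumes fin: "finite (carrier G)"
begin

abbreviation gm (infixl "\<star>" 70) where "a \<star> b \<equiv> ga_mult G a b"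
abbreviation D where "D g \<equiv> ga_delta G g"
abbreviation Z :: "'g \<Rightarrow> complex" where "Z \<equiv> (\<lambda>x. 0)"
abbreviation V where "V \<equiv> ga_sub G (carrier G)"

lemma gm_out: "x \<notin> carrier G \<Longrightarrow> (a \<star> b) x = 0"
  by (simp add: ga_mult_def)

lemma gm_in: "x \<in> carrier G \<Longrightarrow> (a \<star> b) x = (\<Sum>y\<in>carrier G. a y * b (inv y \<otimes> x))"
  by (simp add: ga_mult_def)

lemma gm_V: "a \<star> b \<in> V"
  by (simp add: ga_sub_def gm_out)

lemma sum_lmult: "g \<in> carrier G \<Longrightarrow> (\<Sum>y\<in>carrier G. f (g \<otimes> y)) = (\<Sum>y\<in>carrier G. f y)"
  apply (rule sum.reindex_bij_witness[where i="\<lambda>y. inv g \<otimes> y" and j="\<lambda>y. g \<otimes> y"])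
  by (auto simp: m_assoc[symmetric])

lemma gm_assoc: "(a \<star> b) \<star> c = a \<star> (b \<star> c)"
proof (rule ext)
  fix x
  show "((a \<star> b) \<star> c) x = (a \<star> (b \<star> c)) x"
  proof (cases "x \<in> carrier G")
    case False then show ?thesis by (simp add: gm_out)
  next
    case True
    have "((a \<star> b) \<star> c) x = (\<Sum>y\<in>carrier G. (\<Sum>z\<in>carrier G. a z * b (inv z \<otimes> y)) * c (inv y \<otimes> x))"
      using True by (simp add: gm_in)
    also have "\<dots> = (\<Sum>y\<in>carrier G. \<Sum>z\<in>carrier G. a z * (b (inv z \<otimes> y) * c (inv y \<otimes> x)))"
      by (simp add: sum_distrib_right mult.assoc)
    also have "\<dots> = (\<Sum>z\<in>carrier G. \<Sum>y\<in>carrier G. a z * (b (inv z \<otimes> y) * c (inv y \<otimes> x)))"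
      by (rule sum.swap)
    also have "\<dots> = (\<Sum>z\<in>carrier G. a z * (\<Sum>y\<in>carrier G. b (inv z \<otimes> y) * c (inv y \<otimes> x)))"
      by (simp add: sum_distrib_left)
    also have "\<dots> = (\<Sum>z\<in>carrier G. a z * (\<Sum>w\<in>carrier G. b w * c (inv w \<otimes> (inv z \<otimes> x))))"
    proof (rule sum.cong[OF refl])
      fix z assume z: "z \<in> carrier G"
      have "(\<Sum>y\<in>carrier G. b (inv z \<otimes> y) * c (inv y \<otimes> x)) =
            (\<Sum>w\<in>carrier G. b (inv z \<otimes> (z \<otimes> w)) * c (inv (z \<otimes> w) \<otimes> x))"
        using sum_lmult[OF z, of "\<lambda>y. b (inv z \<otimes> y) * c (inv y \<otimes> x)"] by simp
      also have "\<dots> = (\<Sum>w\<in>carrier G. b w * c (inv w \<otimes> (inv z \<otimes> x)))"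
        using z True by (intro sum.cong) (auto simp: m_assoc[symmetric] inv_mult_group)
      finally show "a z * (\<Sum>y\<in>carrier G. b (inv z \<otimes> y) * c (inv y \<otimes> x)) =
          a z * (\<Sum>w\<in>carrier G. b w * c (inv w \<otimes> (inv z \<otimes> x)))" by simp
    qed
    also have "\<dots> = (a \<star> (b \<star> c)) x"
      using True by (simp add: gm_in)
    finally show ?thesis .
  qed
qed

lemma gm_lin_left: "(\<lambda>x. \<Sum>i\<in>I. m i * f i x) \<star> b = (\<lambda>x. \<Sum>i\<in>I. m i * (f i \<star> b) x)"
  by (rule ext) (simp add: ga_mult_def sum_distrib_right sum_distrib_left mult.assoc sum.swap[of _ "carrier G"])

lemma gm_lin_right: "b \<star> (\<lambda>x. \<Sum>i\<in>I. m i * f i x) = (\<lambda>x. \<Sum>i\<in>I. m i * (b \<star> f i) x)"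
  by (rule ext) (simp add: ga_mult_def sum_distrib_right sum_distrib_left mult.assoc mult.left_commute sum.swap[of _ "carrier G"])

lemma gm_sum_left: "(\<lambda>x. \<Sum>i\<in>I. f i x) \<star> b = (\<lambda>x. \<Sum>i\<in>I. (f i \<star> b) x)"
  using gm_lin_left[where m="\<lambda>_. 1" and I=I and f=f and b=b] by simp

lemma gm_sum_right: "b \<star> (\<lambda>x. \<Sum>i\<in>I. f i x) = (\<lambda>x. \<Sum>i\<in>I. (b \<star> f i) x)"
  using gm_lin_right[where m="\<lambda>_. 1" and I=I and f=f and b=b] by simp

lemma gm_scal_left: "(\<lambda>x. m * a x) \<star> b = (\<lambda>x. m * (a \<star> b) x)"
  by (rule ext) (simp add: ga_mult_def sum_distrib_left mult.assoc)

lemma gm_scal_right: "b \<star> (\<lambda>x. m * a x) = (\<lambda>x. m * (b \<star> a) x)"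
  by (rule ext) (simp add: ga_mult_def sum_distrib_left mult.assoc mult.left_commute)

lemma gm_add_left: "(\<lambda>x. a x + a' x) \<star> b = (\<lambda>x. (a \<star> b) x + (a' \<star> b) x)"
  by (rule ext) (simp add: ga_mult_def sum.distrib distrib_right)

lemma gm_add_right: "b \<star> (\<lambda>x. a x + a' x) = (\<lambda>x. (b \<star> a) x + (b \<star> a') x)"
  by (rule ext) (simp add: ga_mult_def sum.distrib distrib_left)

lemma gm_Z_left[simp]: "Z \<star> b = Z"
  by (rule ext) (simp add: ga_mult_def)

lemma gm_Z_right[simp]: "b \<star> Z = Z"
  by (rule ext) (simp add: ga_mult_def)

lemma D_left: "g \<in> carrier G \<Longrightarrow> (D g \<star> a) x = (if x \<in> carrier G then a (inv g \<otimes> x) else 0)"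
proof (cases "x \<in> carrier G")
  case True
  assume g: "g \<in> carrier G"
  have "(D g \<star> a) x = (\<Sum>y\<in>carrier G. D g y * a (inv y \<otimes> x))"
    using True by (simp add: gm_in)
  also have "\<dots> = (\<Sum>y\<in>carrier G. (if y = g then a (inv g \<otimes> x) else 0))"
    by (rule sum.cong) (auto simp: ga_delta_def)
  also have "\<dots> = a (inv g \<otimes> x)" using g fin by (simp add: sum.delta')
  finally show ?thesis using True by simp
qed (simp add: gm_out)

lemma D_right: "g \<in> carrier G \<Longrightarrow> (a \<star> D g) x = (if x \<in> carrier G then a (x \<otimes> inv g) else 0)"
proof (cases "x \<in> carrier G")
  case True
  assume g: "g \<in> carrier G"
  have "(a \<star> D g) x = (\<Sum>y\<in>carrier G. a y * D g (inv y \<otimes> x))"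
    using True by (simp add: gm_in)
  also have "\<dots> = (\<Sum>y\<in>carrier G. (if y = x \<otimes> inv g then a y else 0))"
  proof (rule sum.cong[OF refl])
    fix y assume y: "y \<in> carrier G"
    have "(inv y \<otimes> x = g) = (y = x \<otimes> inv g)"
      using y g True by (metis inv_closed inv_solve_left' inv_solve_right m_closed)
    then show "a y * D g (inv y \<otimes> x) = (if y = x \<otimes> inv g then a y else 0)"
      by (simp add: ga_delta_def)
  qed
  also have "\<dots> = a (x \<otimes> inv g)" using g True fin by (simp add: sum.delta')
  finally show ?thesis using True by simp
qed (simp add: gm_out)

lemma D_V: "g \<in> carrier G \<Longrightarrow> D g \<in> V"
  by (auto simp: ga_sub_def ga_delta_def)

lemma D_D: "g \<in> carrier G \<Longrightarrow> h \<in> carrier G \<Longrightarrow> D g \<star> D h = D (g \<otimes> h)"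
proof (rule ext)
  fix x assume g: "g \<in> carrier G" and h: "h \<in> carrier G"
  show "(D g \<star> D h) x = D (g \<otimes> h) x"
  proof (cases "x \<in> carrier G")
    case True
    have "(inv g \<otimes> x = h) = (x = g \<otimes> h)"
      using g h True by (metis inv_solve_left')
    then show ?thesis using g True unfolding D_left[OF g] by (simp add: ga_delta_def)
  next
    case False
    then have "x \<noteq> g \<otimes> h" using g h by auto
    then show ?thesis using False g unfolding D_left[OF g] by (simp add: ga_delta_def)
  qed
qed

lemma D_one_left: "a \<in> V \<Longrightarrow> D \<one> \<star> a = a"
  by (rule ext) (auto simp: D_left ga_sub_def)

lemma D_one_right: "a \<in> V \<Longrightarrow> a \<star> D \<one> = a"
  by (rule ext) (auto simp: D_right ga_sub_def)

lemma expand: "a \<in> ga_sub G S \<Longrightarrow> S \<subseteq> carrier G \<Longrightarrow> a = (\<lambda>x. \<Sum>g\<in>S. a g * D g x)"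
proof (rule ext)
  fix x assume a: "a \<in> ga_sub G S" and S: "S \<subseteq> carrier G"
  have fS: "finite S" using S fin finite_subset by blast
  show "a x = (\<Sum>g\<in>S. a g * D g x)"
  proof (cases "x \<in> S")
    case True
    have "(\<Sum>g\<in>S. a g * D g x) = (\<Sum>g\<in>S. if g = x then a x else 0)"
      by (rule sum.cong) (auto simp: ga_delta_def)
    then show ?thesis using fS True by simp
  next
    case False
    then have "(\<Sum>g\<in>S. a g * D g x) = 0" by (intro sum.neutral) (auto simp: ga_delta_def)
    moreover have "a x = 0" using False a unfolding ga_sub_def by blast
    ultimately show ?thesis by simp
  qed
qed

lemma commute_span:
  assumes "a \<in> ga_sub G S" "S \<subseteq> carrier G" "\<And>g. g \<in> S \<Longrightarrow> D g \<star> b = b \<star> D g"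
  shows "a \<star> b = b \<star> a"
proof -
  have ea: "(\<lambda>x. \<Sum>g\<in>S. a g * D g x) = a" using expand[OF assms(1,2)] by (rule sym)
  have "a \<star> b = (\<lambda>x. \<Sum>g\<in>S. a g * D g x) \<star> b" by (simp only: ea)
  also have "\<dots> = (\<lambda>x. \<Sum>g\<in>S. a g * (D g \<star> b) x)" by (rule gm_lin_left)
  also have "\<dots> = (\<lambda>x. \<Sum>g\<in>S. a g * (b \<star> D g) x)" using assms(3) by simp
  also have "\<dots> = b \<star> (\<lambda>x. \<Sum>g\<in>S. a g * D g x)" by (rule gm_lin_right[symmetric])
  also have "\<dots> = b \<star> a" by (simp only: ea)
  finally show ?thesis .
qed

end

context fgrp begin

abbreviation C where "C h a \<equiv> ga_conj G h a"

lemma D_D_assoc: "g \<in> carrier G \<Longrightarrow> h \<in> carrier G \<Longrightarrow> D g \<star> (D h \<star> a) = D (g \<otimes> h) \<star> a"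
  by (simp add: gm_assoc[symmetric] D_D)

lemma conj_eval: "h \<in> carrier G \<Longrightarrow> C h a x = (if x \<in> carrier G then a (inv h \<otimes> x \<otimes> h) else 0)"
  by (simp add: ga_conj_def D_right D_left m_assoc)

lemma conj_V: "C h a \<in> V"
  by (simp add: ga_conj_def gm_V)

lemma conj_comp: "g \<in> carrier G \<Longrightarrow> h \<in> carrier G \<Longrightarrow> C g (C h a) = C (g \<otimes> h) a"
  by (rule ext) (simp add: conj_eval inv_mult_group m_assoc)

lemma conj_one: "a \<in> V \<Longrightarrow> C \<one> a = a"
  by (rule ext) (auto simp: conj_eval ga_sub_def)

lemma conj_inv: "h \<in> carrier G \<Longrightarrow> a \<in> V \<Longrightarrow> C (inv h) (C h a) = a"
  by (simp add: conj_comp conj_one)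

lemma conj_mult: "h \<in> carrier G \<Longrightarrow> C h (a \<star> b) = C h a \<star> C h b"
  by (simp add: ga_conj_def gm_assoc D_D_assoc D_one_left gm_V)

lemma conj_scal: "h \<in> carrier G \<Longrightarrow> C h (\<lambda>x. m * a x) = (\<lambda>x. m * C h a x)"
  by (rule ext) (simp add: conj_eval)

lemma conj_D: "h \<in> carrier G \<Longrightarrow> g \<in> carrier G \<Longrightarrow> C h (D g) = D (h \<otimes> g \<otimes> inv h)"
proof (rule ext)
  fix x assume h: "h \<in> carrier G" and g: "g \<in> carrier G"
  show "C h (D g) x = D (h \<otimes> g \<otimes> inv h) x"
  proof (cases "x \<in> carrier G")
    case True
    have "(inv h \<otimes> x \<otimes> h = g) = (x = h \<otimes> g \<otimes> inv h)"
      using h g True by (metis inv_closed inv_solve_left' inv_solve_right m_closed m_assoc)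
    then show ?thesis using h True by (simp add: conj_eval ga_delta_def)
  next
    case False
    then have "x \<noteq> h \<otimes> g \<otimes> inv h" using h g by auto
    then show ?thesis using h False by (simp add: conj_eval ga_delta_def)
  qed
qed

lemma D_conj_swap: "h \<in> carrier G \<Longrightarrow> a \<in> V \<Longrightarrow> D h \<star> a = C h a \<star> D h"
  by (simp add: ga_conj_def gm_assoc D_D D_one_right gm_V)

lemma conj_Z: "h \<in> carrier G \<Longrightarrow> C h Z = Z"
  by (rule ext) (simp add: conj_eval)

end

locale abK = fgrp + fixes K assumes Ksub: "subgroup K G"
  and Kcomm: "\<And>x y. x \<in> K \<Longrightarrow> y \<in> K \<Longrightarrow> x \<otimes> y = y \<otimes> x"
begin

lemma K_car: "K \<subseteq> carrier G" by (rule subgroup.subset[OF Ksub])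
lemma finK: "finite K" by (rule finite_subset[OF K_car fin])
lemma Kone: "\<one> \<in> K" by (rule subgroup.one_closed[OF Ksub])
lemma Kmult: "x \<in> K \<Longrightarrow> y \<in> K \<Longrightarrow> x \<otimes> y \<in> K" by (rule subgroup.m_closed[OF Ksub])
lemma Kinv: "x \<in> K \<Longrightarrow> inv x \<in> K" by (rule subgroup.m_inv_closed[OF Ksub])
lemma Kc: "x \<in> K \<Longrightarrow> x \<in> carrier G" using K_car by (rule subsetD)
lemma cardK: "card K > 0" using finK Kone by (auto simp: card_gt_0_iff)

lemma comm_sub: "a \<in> ga_sub G K \<Longrightarrow> b \<in> ga_sub G K \<Longrightarrow> a \<star> b = b \<star> a"
proof -
  assume a: "a \<in> ga_sub G K" and b: "b \<in> ga_sub G K"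
  have "D g \<star> b = b \<star> D g" if g: "g \<in> K" for g
  proof -
    have "b \<star> D g = D g \<star> b"
    proof (rule commute_span[OF b K_car])
      fix k assume k: "k \<in> K"
      have "D k \<star> D g = D (k \<otimes> g)" using k g by (intro D_D Kc)
      also have "\<dots> = D (g \<otimes> k)" using Kcomm[OF k g] by simp
      also have "\<dots> = D g \<star> D k" using k g by (intro D_D[symmetric] Kc)
      finally show "D k \<star> D g = D g \<star> D k" .
    qed
    then show ?thesis by simp
  qed
  then show ?thesis by (rule commute_span[OF a K_car])
qed

lemma eig_val: "b \<in> ga_sub G K \<Longrightarrow> k \<in> K \<Longrightarrow> D k \<star> b = (\<lambda>x. m * b x) \<Longrightarrow> b (inv k) = m * b \<one>"
proof -
  assume k: "k \<in> K" and e: "D k \<star> b = (\<lambda>x. m * b x)"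
  have "(D k \<star> b) \<one> = b (inv k)" using k by (simp add: D_left Kc)
  moreover have "(D k \<star> b) \<one> = m * b \<one>" using e by simp
  ultimately show ?thesis by simp
qed

lemma eig_mult: assumes a: "a \<in> ga_sub G K" and e: "\<And>k. k \<in> K \<Longrightarrow> D k \<star> b = (\<lambda>x. \<chi> k * b x)"
  shows "a \<star> b = (\<lambda>x. (\<Sum>k\<in>K. a k * \<chi> k) * b x)"
proof -
  have ea: "(\<lambda>x. \<Sum>g\<in>K. a g * D g x) = a" using expand[OF a K_car] by (rule sym)
  have "a \<star> b = (\<lambda>x. \<Sum>g\<in>K. a g * D g x) \<star> b" by (simp only: ea)
  also have "\<dots> = (\<lambda>x. \<Sum>g\<in>K. a g * (D g \<star> b) x)" by (rule gm_lin_left)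
  also have "\<dots> = (\<lambda>x. \<Sum>g\<in>K. a g * (\<chi> g * b x))" using e by simp
  also have "\<dots> = (\<lambda>x. (\<Sum>k\<in>K. a k * \<chi> k) * b x)" by (simp add: sum_distrib_right mult.assoc)
  finally show ?thesis .
qed

lemma nonzero_point: "b \<noteq> Z \<Longrightarrow> \<exists>x. b x \<noteq> 0" by auto

lemma same_char:
  assumes b: "b \<in> ga_sub G K" and b': "b' \<in> ga_sub G K"
    and e: "\<And>k. k \<in> K \<Longrightarrow> D k \<star> b = (\<lambda>x. \<chi> k * b x)"
    and e': "\<And>k. k \<in> K \<Longrightarrow> D k \<star> b' = (\<lambda>x. \<chi> k * b' x)"
    and i: "b \<star> b = b" and i': "b' \<star> b' = b'" and nz: "b \<noteq> Z" and nz': "b' \<noteq> Z"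
  shows "b = b'"
proof -
  have vb: "b g = \<chi> (inv g) * b \<one>" if "g \<in> K" for g
    using eig_val[OF b Kinv[OF that] e[OF Kinv[OF that]]] that by (simp add: Kc)
  have vb': "b' g = \<chi> (inv g) * b' \<one>" if "g \<in> K" for g
    using eig_val[OF b' Kinv[OF that] e'[OF Kinv[OF that]]] that by (simp add: Kc)
  have b1: "b' \<one> \<noteq> 0"
  proof
    assume "b' \<one> = 0"
    then have "b' x = 0" for x
    proof (cases "x \<in> K")
      case True then show ?thesis using vb'[OF True] \<open>b' \<one> = 0\<close> by (metis mult_zero_right)
    next
      case False then show ?thesis using b' by (simp add: ga_sub_def)
    qed
    then show False using nz' by auto
  qed
  define l where "l = b \<one> / b' \<one>"
  have bl: "b = (\<lambda>x. l * b' x)"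
  proof (rule ext)
    fix x show "b x = l * b' x"
    proof (cases "x \<in> K")
      case True
      have "b x = \<chi> (inv x) * b \<one>" "b' x = \<chi> (inv x) * b' \<one>" using vb[OF True] vb'[OF True] .
      then show ?thesis using b1 by (simp add: l_def)
    next
      case False then show ?thesis using b b' by (simp add: ga_sub_def)
    qed
  qed
  have "b = (\<lambda>x. l * b' x) \<star> (\<lambda>x. l * b' x)" using i bl by simp
  also have "\<dots> = (\<lambda>x. l * (l * b' x))" by (simp add: gm_scal_left gm_scal_right i')
  finally have bb: "b = (\<lambda>x. l * (l * b' x))" .
  obtain x0 where x0: "b' x0 \<noteq> 0" using nz' by auto
  have "l * b' x0 = l * (l * b' x0)" using fun_cong[OF bb, of x0] fun_cong[OF bl, of x0] by simp
  then have "l = l * l" using x0 by simp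
  then have "l = 0 \<or> l = 1" by (metis mult_cancel_left1 mult_zero_left)
  moreover have "l \<noteq> 0" using nz bl by auto
  ultimately show ?thesis using bl by simp
qed

lemma diff_char:
  assumes b: "b \<in> ga_sub G K" and b': "b' \<in> ga_sub G K" and k: "k \<in> K"
    and e: "D k \<star> b = (\<lambda>x. m * b x)" and e': "D k \<star> b' = (\<lambda>x. m' * b' x)"
    and ne: "m \<noteq> m'"
  shows "b \<star> b' = Z"
proof -
  have "D k \<star> (b \<star> b') = (\<lambda>x. m * (b \<star> b') x)"
    by (simp add: gm_assoc[symmetric] e gm_scal_left)
  moreover have "D k \<star> (b' \<star> b) = (\<lambda>x. m' * (b' \<star> b) x)"
    by (simp add: gm_assoc[symmetric] e' gm_scal_left)
  moreover have "b \<star> b' = b' \<star> b" using comm_sub[OF b b'] .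
  ultimately have eq: "(\<lambda>x. m * (b \<star> b') x) = (\<lambda>x. m' * (b \<star> b') x)" by simp
  show ?thesis
  proof (rule ext)
    fix x
    have "m * (b \<star> b') x = m' * (b \<star> b') x" using fun_cong[OF eq, of x] by simp
    then have "(m - m') * (b \<star> b') x = 0" by (simp add: algebra_simps)
    then show "(b \<star> b') x = 0" using ne by simp
  qed
qed

definition eigv where "eigv b \<longleftrightarrow> b \<in> ga_sub G K \<and> b \<star> b = b \<and> b \<noteq> Z \<and> (\<forall>k\<in>K. \<exists>m. D k \<star> b = (\<lambda>x. m * b x))"

lemma orth: assumes b: "eigv b" and b': "eigv b'" and ne: "b \<noteq> b'" shows "b \<star> b' = Z"
proof -
  define \<chi> where "\<chi> k = (SOME m. D k \<star> b = (\<lambda>x. m * b x))" for k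
  define \<chi>' where "\<chi>' k = (SOME m. D k \<star> b' = (\<lambda>x. m * b' x))" for k
  have bs: "b \<in> ga_sub G K" "b \<star> b = b" "b \<noteq> Z" using b unfolding eigv_def by auto
  have bs': "b' \<in> ga_sub G K" "b' \<star> b' = b'" "b' \<noteq> Z" using b' unfolding eigv_def by auto
  have e: "D k \<star> b = (\<lambda>x. \<chi> k * b x)" if "k \<in> K" for k
  proof -
    have "\<exists>m. D k \<star> b = (\<lambda>x. m * b x)" using b that unfolding eigv_def by blast
    then show ?thesis unfolding \<chi>_def by (rule someI_ex)
  qed
  have e': "D k \<star> b' = (\<lambda>x. \<chi>' k * b' x)" if "k \<in> K" for k
  proof -
    have "\<exists>m. D k \<star> b' = (\<lambda>x. m * b' x)" using b' that unfolding eigv_def by blast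
    then show ?thesis unfolding \<chi>'_def by (rule someI_ex)
  qed
  show ?thesis
  proof (cases "\<forall>k\<in>K. \<chi> k = \<chi>' k")
    case True
    have e'': "D k \<star> b' = (\<lambda>x. \<chi> k * b' x)" if "k \<in> K" for k
      using e'[OF that] True that by simp
    have "b = b'" by (rule same_char[OF bs(1) bs'(1) e e'' bs(2) bs'(2) bs(3) bs'(3)])
    then show ?thesis using ne by simp
  next
    case False
    then obtain k where k: "k \<in> K" "\<chi> k \<noteq> \<chi>' k" by auto
    show ?thesis by (rule diff_char[OF bs(1) bs'(1) k(1) e[OF k(1)] e'[OF k(1)] k(2)])
  qed
qed

end

context abK begin

definition charsOn where
  "charsOn L = {\<chi>. \<chi> \<one>\<^bsub>G\<^esub> = (1::complex) \<and> (\<forall>x\<in>L. \<forall>y\<in>L. \<chi> (x \<otimes>\<^bsub>G\<^esub> y) = \<chi> x * \<chi> y) \<and> (\<forall>x. x \<notin> L \<longrightarrow> \<chi> x = 0)}"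

lemma charsOnD:
  assumes "\<chi> \<in> charsOn L"
  shows "\<chi> \<one> = 1" "\<And>x y. x \<in> L \<Longrightarrow> y \<in> L \<Longrightarrow> \<chi> (x \<otimes> y) = \<chi> x * \<chi> y" "\<And>x. x \<notin> L \<Longrightarrow> \<chi> x = 0"
  using assms unfolding charsOn_def by auto

lemma char_inv1:
  assumes "\<chi> \<in> charsOn L" "subgroup L G" "x \<in> L"
  shows "\<chi> x * \<chi> (inv x) = 1"
proof -
  have "inv x \<in> L" using assms(2,3) by (rule subgroup.m_inv_closed)
  then have "\<chi> (x \<otimes> inv x) = \<chi> x * \<chi> (inv x)" using charsOnD(2)[OF assms(1) assms(3)] by simp
  moreover have "x \<otimes> inv x = \<one>" using subgroup.mem_carrier[OF assms(2,3)] by simp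
  ultimately show ?thesis using charsOnD(1)[OF assms(1)] by simp
qed

lemma char_nz: assumes "\<chi> \<in> charsOn L" "subgroup L G" "x \<in> L" shows "\<chi> x \<noteq> 0"
proof
  assume "\<chi> x = 0"
  moreover have "\<chi> x * \<chi> (inv x) = 1" using assms by (rule char_inv1)
  ultimately show False by simp
qed

lemma char_pow: assumes "\<chi> \<in> charsOn L" "subgroup L G" "x \<in> L"
  shows "\<chi> (x [^] (q::nat)) = \<chi> x ^ q \<and> x [^] q \<in> L"
proof (induction q)
  case 0 then show ?case using charsOnD(1)[OF assms(1)] subgroup.one_closed[OF assms(2)] by simp
next
  case (Suc q)
  then have "x [^] Suc q = x [^] q \<otimes> x" by simp
  moreover have "x [^] q \<otimes> x \<in> L" using Suc by (intro subgroup.m_closed[OF assms(2) _ assms(3)]) simp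
  ultimately show ?case using Suc charsOnD(2)[OF assms(1), of "x [^] q" x] assms(3) by simp
qed

lemma gpow_K: "g \<in> K \<Longrightarrow> g [^] (j::nat) \<in> K"
proof (induction j)
  case 0 then show ?case using Kone by simp
next
  case (Suc j) then show ?case using Kmult by simp
qed

lemma order_pos: "0 < order G"
proof -
  have "carrier G \<noteq> {}" using one_closed by (rule ex_in_conv[THEN iffD1, OF exI])
  then show ?thesis unfolding order_def using fin by (simp add: card_gt_0_iff)
qed

lemma least_props:
  assumes L: "subgroup L G" and g: "g \<in> carrier G"
  defines "n \<equiv> (LEAST n::nat. 0 < n \<and> g [^] n \<in> L)"
  shows "0 < n \<and> g [^] n \<in> L"
proof -
  have "0 < order G \<and> g [^] order G \<in> L"
    using order_pos pow_order_eq_1[OF g] subgroup.one_closed[OF L] by simp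
  then show ?thesis unfolding n_def by (rule LeastI)
qed

lemma least_dvd:
  assumes L: "subgroup L G" and g: "g \<in> carrier G"
  defines "n \<equiv> (LEAST n::nat. 0 < n \<and> g [^] n \<in> L)"
  assumes d: "g [^] (d::nat) \<in> L"
  shows "n dvd d"
proof -
  have n: "0 < n" "g [^] n \<in> L" using least_props[OF L g] unfolding n_def by auto
  define q r where "q = d div n" and "r = d mod n"
  have dqr: "d = n * q + r" unfolding q_def r_def by simp
  have e1: "g [^] (n * q) \<otimes> g [^] r = g [^] d" unfolding dqr by (rule nat_pow_mult[OF g])
  have e2: "(g [^] n) [^] q = g [^] (n * q)" by (rule nat_pow_pow[OF g])
  have eq: "g [^] d = (g [^] n) [^] q \<otimes> g [^] r" unfolding e2 e1 ..
  have gq: "(g [^] n) [^] q \<in> L"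
  proof (induction q)
    case 0 then show ?case using subgroup.one_closed[OF L] by simp
  next
    case (Suc q)
    have "(g [^] n) [^] q \<otimes> g [^] n \<in> L" by (rule subgroup.m_closed[OF L Suc n(2)])
    then show ?case by simp
  qed
  have Ac: "(g [^] n) [^] q \<in> carrier G" and Bc: "g [^] r \<in> carrier G" using g by simp_all
  have "inv ((g [^] n) [^] q) \<otimes> g [^] d = inv ((g [^] n) [^] q) \<otimes> ((g [^] n) [^] q \<otimes> g [^] r)"
    by (simp only: eq)
  also have "\<dots> = g [^] r" using Ac Bc by (simp add: m_assoc[symmetric])
  finally have "g [^] r = inv ((g [^] n) [^] q) \<otimes> g [^] d" by (rule sym)
  moreover have "inv ((g [^] n) [^] q) \<in> L" by (rule subgroup.m_inv_closed[OF L gq])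
  ultimately have gr: "g [^] r \<in> L" using subgroup.m_closed[OF L _ d] by simp
  have "r < n" unfolding r_def using n by simp
  then have "\<not> (0 < r \<and> g [^] r \<in> L)" unfolding n_def by (rule not_less_Least)
  then have "r = 0" using gr by simp
  then show ?thesis unfolding r_def by auto
qed


lemma rcancel: "a \<in> carrier G \<Longrightarrow> b \<in> carrier G \<Longrightarrow> c \<in> carrier G \<Longrightarrow> a \<otimes> c = b \<otimes> c \<Longrightarrow> a = b"
  by (metis inv_closed m_assoc r_inv r_one)

lemma pow1: "g \<in> carrier G \<Longrightarrow> g [^] (1::nat) = g"
  using nat_pow_Suc[of g 0] by simp

definition Lx where "Lx L g = {x. \<exists>l\<in>L. \<exists>j::nat. x = l \<otimes>\<^bsub>G\<^esub> g [^]\<^bsub>G\<^esub> j}"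

definition chiX where "chiX L g \<chi> z x = (if x \<in> Lx L g then (SOME r. \<exists>l\<in>L. \<exists>j::nat. x = l \<otimes>\<^bsub>G\<^esub> g [^]\<^bsub>G\<^esub> j \<and> r = \<chi> l * z ^ j) else (0::complex))"

context
  fixes L g
  assumes L: "subgroup L G" and LK: "L \<subseteq> K" and gK: "g \<in> K"
begin

lemma gc: "g \<in> carrier G" using gK by (rule Kc)
lemma Lc: "l \<in> L \<Longrightarrow> l \<in> carrier G" by (rule subgroup.mem_carrier[OF L])
lemma LKm: "l \<in> L \<Longrightarrow> l \<in> K" using LK by (rule subsetD)

lemma comm_gl: "l \<in> L \<Longrightarrow> g [^] (j::nat) \<otimes> l = l \<otimes> g [^] j"
  by (rule Kcomm[OF gpow_K[OF gK] LKm])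

lemma prodLx:
  assumes l: "l \<in> L" and l': "l' \<in> L"
  shows "(l \<otimes> g [^] (j::nat)) \<otimes> (l' \<otimes> g [^] (k::nat)) = (l \<otimes> l') \<otimes> g [^] (j + k)"
proof -
  have lc: "l \<in> carrier G" and l'c: "l' \<in> carrier G" using Lc l l' by auto
  have gc': "g \<in> carrier G" by (rule gc)
  have "(l \<otimes> g [^] j) \<otimes> (l' \<otimes> g [^] k) = l \<otimes> ((g [^] j \<otimes> l') \<otimes> g [^] k)"
    using lc l'c gc' by (simp add: m_assoc)
  also have "\<dots> = l \<otimes> ((l' \<otimes> g [^] j) \<otimes> g [^] k)" by (simp only: comm_gl[OF l'])
  also have "\<dots> = (l \<otimes> l') \<otimes> (g [^] j \<otimes> g [^] k)" using lc l'c gc' by (simp add: m_assoc)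
  also have "\<dots> = (l \<otimes> l') \<otimes> g [^] (j + k)" using gc' by (simp add: nat_pow_mult)
  finally show ?thesis .
qed

lemma Lx_sub: "subgroup (Lx L g) G"
proof (rule subgroupI)
  show "Lx L g \<subseteq> carrier G" unfolding Lx_def using Lc gc by auto
  have "\<one> = \<one> \<otimes> g [^] (0::nat)" by simp
  then have "\<one> \<in> Lx L g" unfolding Lx_def using subgroup.one_closed[OF L] by blast
  then show "Lx L g \<noteq> {}" by blast
next
  fix a assume "a \<in> Lx L g"
  then obtain l and j :: nat where l: "l \<in> L" and a: "a = l \<otimes> g [^] j" unfolding Lx_def by blast
  define m where "m = order G"
  have m1: "1 \<le> m" using order_pos unfolding m_def by simp
  have il: "inv l \<in> L" by (rule subgroup.m_inv_closed[OF L l])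
  have "(inv l \<otimes> g [^] ((m - 1) * j)) \<otimes> a = (inv l \<otimes> l) \<otimes> g [^] ((m - 1) * j + j)"
    unfolding a by (rule prodLx[OF il l])
  also have "(m - 1) * j + j = m * j" using m1 by (simp add: algebra_simps)
  also have "inv l \<otimes> l = \<one>" using Lc[OF l] by simp
  also have "g [^] (m * j) = (g [^] m) [^] j" using nat_pow_pow[OF gc] by simp
  also have "g [^] m = \<one>" unfolding m_def by (rule pow_order_eq_1[OF gc])
  finally have eq: "(inv l \<otimes> g [^] ((m - 1) * j)) \<otimes> a = \<one>" by simp
  have ac: "a \<in> carrier G" unfolding a using Lc[OF l] gc by simp
  have yc: "inv l \<otimes> g [^] ((m - 1) * j) \<in> carrier G" using Lc[OF il] gc by simp
  have "inv a = inv l \<otimes> g [^] ((m - 1) * j)" by (rule inv_equality[OF eq ac yc])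
  then show "inv a \<in> Lx L g" unfolding Lx_def using il by blast
next
  fix a b assume "a \<in> Lx L g" "b \<in> Lx L g"
  then obtain l l' and j k :: nat where l: "l \<in> L" "a = l \<otimes> g [^] j" and l': "l' \<in> L" "b = l' \<otimes> g [^] k"
    unfolding Lx_def by blast
  have "a \<otimes> b = (l \<otimes> l') \<otimes> g [^] (j + k)" unfolding l(2) l'(2) by (rule prodLx[OF l(1) l'(1)])
  moreover have "l \<otimes> l' \<in> L" by (rule subgroup.m_closed[OF L l(1) l'(1)])
  ultimately show "a \<otimes> b \<in> Lx L g" unfolding Lx_def by blast
qed

lemma L_Lx: "L \<subseteq> Lx L g"
proof
  fix l assume l: "l \<in> L"
  have "l = l \<otimes> g [^] (0::nat)" using Lc[OF l] by simp
  then show "l \<in> Lx L g" unfolding Lx_def using l by blast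
qed

lemma g_Lx: "g \<in> Lx L g"
proof -
  have "g = \<one> \<otimes> g [^] (1::nat)" using gc by (simp add: pow1)
  then show ?thesis unfolding Lx_def using subgroup.one_closed[OF L] by blast
qed

lemma Lx_K: "Lx L g \<subseteq> K"
proof
  fix x assume "x \<in> Lx L g"
  then obtain l and j :: nat where l: "l \<in> L" "x = l \<otimes> g [^] j" unfolding Lx_def by blast
  show "x \<in> K" unfolding l(2) by (rule Kmult[OF LKm[OF l(1)] gpow_K[OF gK]])
qed

context
  fixes \<chi> z
  assumes chi: "\<chi> \<in> charsOn L"
    and zn: "z ^ (LEAST n::nat. 0 < n \<and> g [^] n \<in> L) = \<chi> (g [^] (LEAST n::nat. 0 < n \<and> g [^] n \<in> L))"
begin

lemma wd1:
  assumes l: "l \<in> L" and l': "l' \<in> L" and jj: "j \<le> j'" and eq: "l \<otimes> g [^] (j::nat) = l' \<otimes> g [^] (j'::nat)"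
  shows "\<chi> l * z ^ j = \<chi> l' * z ^ j'"
proof -
  define n where "n = (LEAST n::nat. 0 < n \<and> g [^] n \<in> L)"
  have zn': "z ^ n = \<chi> (g [^] n)" using zn unfolding n_def .
  have n: "0 < n" "g [^] n \<in> L" using least_props[OF L gc] unfolding n_def by auto
  define d where "d = j' - j"
  have j': "j' = d + j" unfolding d_def using jj by simp
  have "l' \<otimes> g [^] j' = (l' \<otimes> g [^] d) \<otimes> g [^] j"
    unfolding j' using Lc[OF l'] gc by (simp add: m_assoc nat_pow_mult)
  then have "l \<otimes> g [^] j = (l' \<otimes> g [^] d) \<otimes> g [^] j" using eq by simp
  then have ll: "l = l' \<otimes> g [^] d" by (rule rcancel[OF Lc[OF l] m_closed[OF Lc[OF l'] nat_pow_closed[OF gc]] nat_pow_closed[OF gc]])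
  have "inv l' \<otimes> l = g [^] d" unfolding ll using Lc[OF l'] gc by (simp add: m_assoc[symmetric])
  moreover have "inv l' \<otimes> l \<in> L" by (rule subgroup.m_closed[OF L subgroup.m_inv_closed[OF L l'] l])
  ultimately have gd: "g [^] d \<in> L" by simp
  have "n dvd d" unfolding n_def by (rule least_dvd[OF L gc gd])
  then obtain q where dq: "d = n * q" by blast
  have gdq: "g [^] d = (g [^] n) [^] q" unfolding dq by (rule nat_pow_pow[OF gc, symmetric])
  have cq: "\<chi> ((g [^] n) [^] q) = \<chi> (g [^] n) ^ q" using char_pow[OF chi L n(2)] by simp
  have "\<chi> l = \<chi> l' * \<chi> (g [^] d)" unfolding ll by (rule charsOnD(2)[OF chi l' gd])
  also have "\<dots> = \<chi> l' * \<chi> (g [^] n) ^ q" unfolding gdq cq ..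
  finally have cl: "\<chi> l = \<chi> l' * \<chi> (g [^] n) ^ q" .
  have "z ^ j' = z ^ j * (z ^ n) ^ q" unfolding j' dq by (simp add: power_add power_mult)
  then show ?thesis unfolding cl zn' by simp
qed

lemma wd:
  assumes l: "l \<in> L" and l': "l' \<in> L" and eq: "l \<otimes> g [^] (j::nat) = l' \<otimes> g [^] (j'::nat)"
  shows "\<chi> l * z ^ j = \<chi> l' * z ^ j'"
proof (cases "j \<le> j'")
  case True then show ?thesis by (rule wd1[OF l l' _ eq])
next
  case False then show ?thesis using wd1[OF l' l _ eq[symmetric]] by simp
qed

lemma chiX_val: "l \<in> L \<Longrightarrow> chiX L g \<chi> z (l \<otimes> g [^] (j::nat)) = \<chi> l * z ^ j"
proof -
  assume l: "l \<in> L"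
  let ?x = "l \<otimes> g [^] j"
  have xin: "?x \<in> Lx L g" unfolding Lx_def using l by blast
  define P where "P r = (\<exists>l'\<in>L. \<exists>j'::nat. ?x = l' \<otimes> g [^] j' \<and> r = \<chi> l' * z ^ j')" for r
  have "P (\<chi> l * z ^ j)" unfolding P_def using l by blast
  then have "P (SOME r. P r)" by (rule someI)
  then obtain l' j' where l': "l' \<in> L" "?x = l' \<otimes> g [^] j'" "(SOME r. P r) = \<chi> l' * z ^ j'"
    unfolding P_def by blast
  have "chiX L g \<chi> z ?x = (SOME r. P r)" unfolding chiX_def P_def using xin by simp
  also have "\<dots> = \<chi> l' * z ^ j'" by (rule l'(3))
  also have "\<dots> = \<chi> l * z ^ j" using wd[OF l l'(1) l'(2)] by simp
  finally show ?thesis .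
qed

lemma chiX_char: "chiX L g \<chi> z \<in> charsOn (Lx L g)"
  unfolding charsOn_def
proof (intro CollectI conjI ballI allI impI)
  have "chiX L g \<chi> z (\<one> \<otimes> g [^] (0::nat)) = \<chi> \<one> * z ^ 0" by (rule chiX_val[OF subgroup.one_closed[OF L]])
  then show "chiX L g \<chi> z \<one> = 1" using charsOnD(1)[OF chi] by simp
next
  fix x y assume "x \<in> Lx L g" "y \<in> Lx L g"
  then obtain l l' and j k :: nat where l: "l \<in> L" "x = l \<otimes> g [^] j" and l': "l' \<in> L" "y = l' \<otimes> g [^] k"
    unfolding Lx_def by blast
  have xy: "x \<otimes> y = (l \<otimes> l') \<otimes> g [^] (j + k)" unfolding l(2) l'(2) by (rule prodLx[OF l(1) l'(1)])
  have ll: "l \<otimes> l' \<in> L" by (rule subgroup.m_closed[OF L l(1) l'(1)])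
  have "chiX L g \<chi> z (x \<otimes> y) = \<chi> (l \<otimes> l') * z ^ (j + k)" unfolding xy by (rule chiX_val[OF ll])
  also have "\<dots> = (\<chi> l * z ^ j) * (\<chi> l' * z ^ k)"
    using charsOnD(2)[OF chi l(1) l'(1)] by (simp add: power_add)
  also have "\<dots> = chiX L g \<chi> z x * chiX L g \<chi> z y" unfolding l(2) l'(2) chiX_val[OF l(1)] chiX_val[OF l'(1)] ..
  finally show "chiX L g \<chi> z (x \<otimes> y) = chiX L g \<chi> z x * chiX L g \<chi> z y" .
next
  fix x assume "x \<notin> Lx L g"
  then show "chiX L g \<chi> z x = 0" unfolding chiX_def by simp
qed

lemma chiX_agree: "l \<in> L \<Longrightarrow> chiX L g \<chi> z l = \<chi> l"
  using chiX_val[of l 0] Lc[of l] by simp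

lemma chiX_g: "chiX L g \<chi> z g = z"
  using chiX_val[OF subgroup.one_closed[OF L], of 1] gc charsOnD(1)[OF chi] by (simp add: pow1)

end
end


lemma root_ex: assumes "c \<noteq> 0" "0 < n" shows "\<exists>z::complex. z ^ n = c"
proof -
  have "bij_betw ((*) (complex_of_real (root n (cmod c)) * cis (Arg c / real n))) {z. z ^ n = 1} {z. z ^ n = c}"
    by (rule bij_betw_nth_root_unity[OF assms])
  from bij_betwE[OF this, rule_format, of 1]
  have "(complex_of_real (root n (cmod c)) * cis (Arg c / real n)) * 1 \<in> {z. z ^ n = c}" by simp
  then show ?thesis by blast
qed

lemma extend:
  assumes "subgroup L G" "L \<subseteq> K" "\<chi> \<in> charsOn L"
  shows "\<exists>\<chi>'\<in>charsOn K. \<forall>l\<in>L. \<chi>' l = \<chi> l"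
  using assms
proof (induction "card (K - L)" arbitrary: L \<chi> rule: less_induct)
  case less
  note L = less.prems(1) and LK = less.prems(2) and chi = less.prems(3)
  show ?case
  proof (cases "K \<subseteq> L")
    case True
    then have "L = K" using LK by blast
    then show ?thesis using chi by blast
  next
    case False
    then obtain g where g: "g \<in> K" "g \<notin> L" by blast
    define n where "n = (LEAST n::nat. 0 < n \<and> g [^] n \<in> L)"
    have n: "0 < n" "g [^] n \<in> L" using least_props[OF L Kc[OF g(1)]] unfolding n_def by auto
    have "\<chi> (g [^] n) \<noteq> 0" by (rule char_nz[OF chi L n(2)])
    then obtain z where z: "z ^ n = \<chi> (g [^] n)" using root_ex n(1) by blast
    have chi2: "chiX L g \<chi> z \<in> charsOn (Lx L g)"
      by (rule chiX_char[OF L LK g(1) chi]) (use z in \<open>simp add: n_def\<close>)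
    have ag: "chiX L g \<chi> z l = \<chi> l" if "l \<in> L" for l
      by (rule chiX_agree[OF L LK g(1) chi _ that]) (use z in \<open>simp add: n_def\<close>)
    have sub: "K - Lx L g \<subset> K - L"
      using L_Lx[OF L LK g(1)] g_Lx[OF L LK g(1)] g by blast
    have "card (K - Lx L g) < card (K - L)"
      by (rule psubset_card_mono[OF _ sub]) (use finK in simp)
    then obtain \<chi>' where c': "\<chi>' \<in> charsOn K" "\<forall>l\<in>Lx L g. \<chi>' l = chiX L g \<chi> z l"
      using less.hyps[OF _ Lx_sub[OF L LK g(1)] Lx_K[OF L LK g(1)] chi2] by blast
    show ?thesis
    proof (intro bexI[OF _ c'(1)] ballI)
      fix l assume l: "l \<in> L"
      then have "l \<in> Lx L g" using L_Lx[OF L LK g(1)] by blast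
      then show "\<chi>' l = \<chi> l" using c'(2) ag[OF l] by simp
    qed
  qed
qed

lemma cis_ne1: assumes "2 \<le> n" shows "cis (2 * pi / real n) \<noteq> 1"
proof
  assume h: "cis (2 * pi / real n) = 1"
  show False
  proof (cases "n = 2")
    case True
    then have "cis pi = 1" using h by simp
    then have "Re (cis pi) = 1" by simp
    then show False by simp
  next
    case False
    then have n3: "3 \<le> n" using assms by simp
    have "0 < 2 * pi / real n" using assms by simp
    moreover have "2 * pi / real n < pi"
    proof -
      have "2 * pi / real n \<le> 2 * pi / 3" using n3 by (intro divide_left_mono) auto
      also have "\<dots> < pi" by simp
      finally show ?thesis .
    qed
    ultimately have "0 < sin (2 * pi / real n)" by (rule sin_gt_zero)
    moreover have "Im (cis (2 * pi / real n)) = 0" using h by simp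
    ultimately show False by simp
  qed
qed

lemma sep:
  assumes g: "g \<in> K" and g1: "g \<noteq> \<one>"
  shows "\<exists>\<chi>\<in>charsOn K. \<chi> g \<noteq> 1"
proof -
  have L: "subgroup {\<one>} G" by (rule triv_subgroup)
  have LK: "{\<one>} \<subseteq> K" using Kone by simp
  define \<chi>0 where "\<chi>0 = (\<lambda>x. if x = \<one> then (1::complex) else 0)"
  have c0: "\<chi>0 \<in> charsOn {\<one>}" unfolding charsOn_def \<chi>0_def by simp
  define n where "n = (LEAST n::nat. 0 < n \<and> g [^] n \<in> {\<one>})"
  have n: "0 < n" "g [^] n \<in> {\<one>}" using least_props[OF L Kc[OF g]] unfolding n_def by auto
  have "n \<noteq> 1" using n(2) g1 pow1[OF Kc[OF g]] by auto
  then have n2: "2 \<le> n" using n(1) by simp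
  define z where "z = cis (2 * pi / real n)"
  have "z ^ n = cis (real n * (2 * pi / real n))" unfolding z_def by (rule DeMoivre)
  also have "real n * (2 * pi / real n) = 2 * pi" using n(1) by simp
  finally have zn: "z ^ n = 1" by simp
  have zn': "z ^ n = \<chi>0 (g [^] n)" using zn n(2) unfolding \<chi>0_def by simp
  have z1: "z \<noteq> 1" unfolding z_def by (rule cis_ne1[OF n2])
  have chi2: "chiX {\<one>} g \<chi>0 z \<in> charsOn (Lx {\<one>} g)"
    by (rule chiX_char[OF L LK g c0]) (use zn' in \<open>simp add: n_def\<close>)
  have cg: "chiX {\<one>} g \<chi>0 z g = z"
    by (rule chiX_g[OF L LK g c0]) (use zn' in \<open>simp add: n_def\<close>)
  obtain \<chi> where c: "\<chi> \<in> charsOn K" "\<forall>l\<in>Lx {\<one>} g. \<chi> l = chiX {\<one>} g \<chi>0 z l"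
    using extend[OF Lx_sub[OF L LK g] Lx_K[OF L LK g] chi2] by blast
  have "\<chi> g = z" using c(2) g_Lx[OF L LK g] cg by simp
  then show ?thesis using c(1) z1 by blast
qed
end

context abK begin

lemma char_inv2: "\<chi> \<in> charsOn K \<Longrightarrow> x \<in> K \<Longrightarrow> \<chi> (inv x) * \<chi> x = 1"
  using char_inv1[OF _ Ksub] by (simp add: mult.commute)

lemma char_pow_card: assumes chi: "\<chi> \<in> charsOn K" and k: "k \<in> K" shows "\<chi> k ^ card K = 1"
proof -
  have "(\<Prod>x\<in>K. \<chi> (k \<otimes> x)) = (\<Prod>x\<in>K. \<chi> x)"
  proof (rule prod.reindex_bij_witness[where i="\<lambda>x. inv k \<otimes> x" and j="\<lambda>x. k \<otimes> x"])
    fix a assume a: "a \<in> K"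
    show "inv k \<otimes> (k \<otimes> a) = a" using Kc[OF a] Kc[OF k] by (simp add: m_assoc[symmetric])
    show "k \<otimes> a \<in> K" by (rule Kmult[OF k a])
    show "\<chi> (k \<otimes> a) = \<chi> (k \<otimes> a)" ..
  next
    fix b assume b: "b \<in> K"
    show "k \<otimes> (inv k \<otimes> b) = b" using Kc[OF b] Kc[OF k] by (simp add: m_assoc[symmetric])
    show "inv k \<otimes> b \<in> K" by (rule Kmult[OF Kinv[OF k] b])
  qed
  moreover have "(\<Prod>x\<in>K. \<chi> (k \<otimes> x)) = (\<Prod>x\<in>K. \<chi> k * \<chi> x)"
    by (rule prod.cong[OF refl]) (rule charsOnD(2)[OF chi k])
  moreover have "(\<Prod>x\<in>K. \<chi> k * \<chi> x) = \<chi> k ^ card K * (\<Prod>x\<in>K. \<chi> x)"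
    by (simp add: prod.distrib)
  moreover have "(\<Prod>x\<in>K. \<chi> x) \<noteq> 0"
    using finK char_nz[OF chi Ksub] by (simp add: prod_zero_iff)
  ultimately show ?thesis by simp
qed

lemma chars_finite: "finite (charsOn K)"
proof -
  let ?R = "{z::complex. z ^ card K = 1}"
  have fR: "finite ?R" using cardK by (intro finite_roots_unity) simp
  have "charsOn K \<subseteq> (\<lambda>f x. if x \<in> K then f x else 0) ` (PiE K (\<lambda>_. ?R))"
  proof
    fix \<chi> assume chi: "\<chi> \<in> charsOn K"
    have "restrict \<chi> K \<in> PiE K (\<lambda>_. ?R)" using char_pow_card[OF chi] by simp
    moreover have "\<chi> = (\<lambda>x. if x \<in> K then restrict \<chi> K x else 0)"
      using charsOnD(3)[OF chi] by (auto simp: fun_eq_iff)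
    ultimately show "\<chi> \<in> (\<lambda>f x. if x \<in> K then f x else 0) ` (PiE K (\<lambda>_. ?R))" by blast
  qed
  moreover have "finite ((\<lambda>f x. if x \<in> K then f x else 0) ` (PiE K (\<lambda>_. ?R)))"
    using finK fR by (intro finite_imageI finite_PiE) auto
  ultimately show ?thesis by (rule finite_subset)
qed

definition ech where "ech \<chi> = (\<lambda>x. if x \<in> K then \<chi> (inv\<^bsub>G\<^esub> x) / of_nat (card K) else (0::complex))"

lemma ech_sub: "ech \<chi> \<in> ga_sub G K"
  by (simp add: ga_sub_def ech_def)

lemma D_sub: "k \<in> K \<Longrightarrow> D k \<in> ga_sub G K"
  by (simp add: ga_sub_def ga_delta_def)

lemma ech_eig: assumes chi: "\<chi> \<in> charsOn K" and k: "k \<in> K"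
  shows "D k \<star> ech \<chi> = (\<lambda>x. \<chi> k * ech \<chi> x)"
proof (rule ext)
  fix x
  show "(D k \<star> ech \<chi>) x = \<chi> k * ech \<chi> x"
  proof (cases "x \<in> K")
    case True
    have ik: "inv k \<otimes> x \<in> K" by (rule Kmult[OF Kinv[OF k] True])
    have "inv (inv k \<otimes> x) = inv x \<otimes> k" using Kc[OF k] Kc[OF True] by (simp add: inv_mult_group)
    then have "\<chi> (inv (inv k \<otimes> x)) = \<chi> (inv x) * \<chi> k" using charsOnD(2)[OF chi Kinv[OF True] k] by simp
    then show ?thesis using True ik Kc[OF True] by (simp add: D_left[OF Kc[OF k]] ech_def)
  next
    case False
    show ?thesis
    proof (cases "x \<in> carrier G")
      case xc: True
      have "inv k \<otimes> x \<notin> K"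
      proof
        assume h: "inv k \<otimes> x \<in> K"
        then have "k \<otimes> (inv k \<otimes> x) \<in> K" by (rule Kmult[OF k])
        moreover have "k \<otimes> (inv k \<otimes> x) = x" using xc Kc[OF k] by (simp add: m_assoc[symmetric])
        ultimately show False using False by simp
      qed
      then show ?thesis using False by (simp add: D_left[OF Kc[OF k]] ech_def)
    next
      case False
      then show ?thesis using Kc by (auto simp add: D_left[OF Kc[OF k]] ech_def)
    qed
  qed
qed

lemma ech_idem: assumes chi: "\<chi> \<in> charsOn K" shows "ech \<chi> \<star> ech \<chi> = ech \<chi>"
proof -
  have "ech \<chi> \<star> ech \<chi> = (\<lambda>x. (\<Sum>k\<in>K. ech \<chi> k * \<chi> k) * ech \<chi> x)"
    by (rule eig_mult[OF ech_sub ech_eig[OF chi]])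
  also have "(\<Sum>k\<in>K. ech \<chi> k * \<chi> k) = (\<Sum>k\<in>K. 1 / of_nat (card K))"
  proof (rule sum.cong[OF refl])
    fix k assume k: "k \<in> K"
    show "ech \<chi> k * \<chi> k = 1 / of_nat (card K)" using char_inv2[OF chi k] k by (simp add: ech_def)
  qed
  also have "\<dots> = 1" using cardK by simp
  finally show ?thesis by simp
qed

lemma ech_one: assumes c: "\<chi> \<in> charsOn K" shows "ech \<chi> \<one> \<noteq> 0"
proof -
  have "\<chi> \<one> = 1" by (rule charsOnD(1)[OF c])
  then show ?thesis using Kone cardK by (simp add: ech_def)
qed

lemma ech_nz: "\<chi> \<in> charsOn K \<Longrightarrow> ech \<chi> \<noteq> Z"
  using ech_one by fastforce

lemma ech_eigv: "\<chi> \<in> charsOn K \<Longrightarrow> eigv (ech \<chi>)"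
  unfolding eigv_def using ech_sub ech_idem ech_nz ech_eig by blast

lemma ech_inj: "inj_on ech (charsOn K)"
proof (rule inj_onI)
  fix \<chi> \<chi>' assume c: "\<chi> \<in> charsOn K" and c': "\<chi>' \<in> charsOn K" and e: "ech \<chi> = ech \<chi>'"
  show "\<chi> = \<chi>'"
  proof (rule ext)
    fix k show "\<chi> k = \<chi>' k"
    proof (cases "k \<in> K")
      case True
      have ik: "inv k \<in> K" by (rule Kinv[OF True])
      have "ech \<chi> (inv k) = ech \<chi>' (inv k)" using e by simp
      then show ?thesis using ik cardK Kc[OF True] by (simp add: ech_def)
    next
      case False then show ?thesis using charsOnD(3)[OF c] charsOnD(3)[OF c'] by simp
    qed
  qed
qed

lemma triv_char: "(\<lambda>x. if x \<in> K then (1::complex) else 0) \<in> charsOn K"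
  unfolding charsOn_def using Kone Kmult by auto

lemma card_chars: "0 < card (charsOn K)"
  using chars_finite triv_char card_gt_0_iff by blast

lemma mul_char: "\<chi>0 \<in> charsOn K \<Longrightarrow> \<chi> \<in> charsOn K \<Longrightarrow> (\<lambda>x. \<chi>0 x * \<chi> x) \<in> charsOn K"
  unfolding charsOn_def by auto

lemma inv_char: "\<chi>0 \<in> charsOn K \<Longrightarrow> \<chi> \<in> charsOn K \<Longrightarrow> (\<lambda>x. inverse (\<chi>0 x) * \<chi> x) \<in> charsOn K"
  unfolding charsOn_def by (auto simp: inverse_mult_distrib)

lemma char_sum: assumes g: "g \<in> K"
  shows "(\<Sum>\<chi>\<in>charsOn K. \<chi> g) = (if g = \<one> then of_nat (card (charsOn K)) else 0)"
proof (cases "g = \<one>")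
  case True
  have "(\<Sum>\<chi>\<in>charsOn K. \<chi> \<one>) = (\<Sum>\<chi>\<in>charsOn K. 1)" by (rule sum.cong[OF refl]) (rule charsOnD(1))
  then show ?thesis using True by simp
next
  case False
  obtain \<chi>0 where c0: "\<chi>0 \<in> charsOn K" "\<chi>0 g \<noteq> 1" using sep[OF g False] by blast
  have "(\<Sum>\<chi>\<in>charsOn K. \<chi>0 g * \<chi> g) = (\<Sum>\<chi>\<in>charsOn K. \<chi> g)"
  proof (rule sum.reindex_bij_witness[where i="\<lambda>\<chi> x. inverse (\<chi>0 x) * \<chi> x" and j="\<lambda>\<chi> x. \<chi>0 x * \<chi> x"])
    fix a assume a: "a \<in> charsOn K"
    show "(\<lambda>x. inverse (\<chi>0 x) * (\<chi>0 x * a x)) = a"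
    proof (rule ext)
      fix x show "inverse (\<chi>0 x) * (\<chi>0 x * a x) = a x"
        using char_nz[OF c0(1) Ksub, of x] charsOnD(3)[OF a, of x] by (cases "x \<in> K") auto
    qed
    show "(\<lambda>x. \<chi>0 x * a x) \<in> charsOn K" by (rule mul_char[OF c0(1) a])
    show "\<chi>0 g * a g = \<chi>0 g * a g" ..
  next
    fix b assume b: "b \<in> charsOn K"
    show "(\<lambda>x. \<chi>0 x * (inverse (\<chi>0 x) * b x)) = b"
    proof (rule ext)
      fix x show "\<chi>0 x * (inverse (\<chi>0 x) * b x) = b x"
        using char_nz[OF c0(1) Ksub, of x] charsOnD(3)[OF b, of x] by (cases "x \<in> K") auto
    qed
    show "(\<lambda>x. inverse (\<chi>0 x) * b x) \<in> charsOn K" by (rule inv_char[OF c0(1) b])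
  qed
  then have "\<chi>0 g * (\<Sum>\<chi>\<in>charsOn K. \<chi> g) = (\<Sum>\<chi>\<in>charsOn K. \<chi> g)" by (simp add: sum_distrib_left)
  then have "(\<chi>0 g - 1) * (\<Sum>\<chi>\<in>charsOn K. \<chi> g) = 0" by (simp add: algebra_simps)
  then show ?thesis using c0(2) False by simp
qed

lemma delta_span: assumes k: "k \<in> K"
  shows "D k = (\<lambda>x. \<Sum>\<chi>\<in>charsOn K. (of_nat (card K) / of_nat (card (charsOn K)) * \<chi> k) * ech \<chi> x)"
proof (rule ext)
  fix x
  show "D k x = (\<Sum>\<chi>\<in>charsOn K. (of_nat (card K) / of_nat (card (charsOn K)) * \<chi> k) * ech \<chi> x)"
  proof (cases "x \<in> K")
    case True
    have kx: "k \<otimes> inv x \<in> K" by (rule Kmult[OF k Kinv[OF True]])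
    have "(\<Sum>\<chi>\<in>charsOn K. (of_nat (card K) / of_nat (card (charsOn K)) * \<chi> k) * ech \<chi> x)
        = (\<Sum>\<chi>\<in>charsOn K. \<chi> (k \<otimes> inv x) / of_nat (card (charsOn K)))"
    proof (rule sum.cong[OF refl])
      fix \<chi> assume c: "\<chi> \<in> charsOn K"
      show "(of_nat (card K) / of_nat (card (charsOn K)) * \<chi> k) * ech \<chi> x = \<chi> (k \<otimes> inv x) / of_nat (card (charsOn K))"
        using charsOnD(2)[OF c k Kinv[OF True]] True cardK by (simp add: ech_def)
    qed
    also have "\<dots> = (\<Sum>\<chi>\<in>charsOn K. \<chi> (k \<otimes> inv x)) / of_nat (card (charsOn K))"
      by (simp add: sum_divide_distrib)
    also have "\<dots> = (if k \<otimes> inv x = \<one> then 1 else 0)"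
      using char_sum[OF kx] card_chars by simp
    also have "(k \<otimes> inv x = \<one>) = (x = k)"
      using Kc[OF k] Kc[OF True] by (metis inv_closed inv_equality inv_inv r_inv)
    finally show ?thesis by (simp add: ga_delta_def eq_commute)
  next
    case False
    then have "x \<noteq> k" using k by blast
    moreover have "ech \<chi> x = 0" for \<chi> using False by (simp add: ech_def)
    ultimately show ?thesis by (simp add: ga_delta_def)
  qed
qed

end

context abK begin

definition PB where "PB B \<longleftrightarrow> ga_basis G K B \<and>
     (\<forall>b\<in>B. \<forall>a\<in>ga_sub G K. \<exists>\<mu>. ga_mult G a b = (\<lambda>x. \<mu> * b x)) \<and>
     (\<forall>b\<in>B. ga_mult G b b = b) \<and>
     (\<forall>b\<in>B. \<forall>b'\<in>B. b \<noteq> b' \<longrightarrow> ga_mult G b b' = (\<lambda>x. 0))"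

lemma indep:
  assumes fB: "finite B" and ev: "\<And>b. b \<in> B \<Longrightarrow> eigv b"
    and ort: "\<And>b b'. b \<in> B \<Longrightarrow> b' \<in> B \<Longrightarrow> b \<noteq> b' \<Longrightarrow> b \<star> b' = Z"
    and s: "(\<lambda>x. \<Sum>b\<in>B. f b * b x) = Z" and b0: "b0 \<in> B"
  shows "f b0 = 0"
proof -
  have "(\<lambda>x. \<Sum>b\<in>B. f b * b x) \<star> b0 = (\<lambda>x. \<Sum>b\<in>B. f b * (b \<star> b0) x)" by (rule gm_lin_left)
  also have "\<dots> = (\<lambda>x. f b0 * b0 x)"
  proof (rule ext)
    fix x
    have "(\<Sum>b\<in>B. f b * (b \<star> b0) x) = f b0 * (b0 \<star> b0) x + (\<Sum>b\<in>B - {b0}. f b * (b \<star> b0) x)"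
      by (rule sum.remove[OF fB b0])
    also have "(\<Sum>b\<in>B - {b0}. f b * (b \<star> b0) x) = 0"
      by (rule sum.neutral) (use ort b0 in auto)
    also have "b0 \<star> b0 = b0" using ev[OF b0] unfolding eigv_def by simp
    finally show "(\<Sum>b\<in>B. f b * (b \<star> b0) x) = f b0 * b0 x" by simp
  qed
  finally have "(\<lambda>x. f b0 * b0 x) = Z" using s by simp
  moreover obtain x where "b0 x \<noteq> 0" using ev[OF b0] unfolding eigv_def by auto
  ultimately show ?thesis by (metis mult_eq_0_iff)
qed

lemma PB_eigv: assumes P: "PB B" and b: "b \<in> B" shows "eigv b"
proof -
  have fB: "finite B" and sub: "B \<subseteq> ga_sub G K"
    and ind: "\<And>f. (\<lambda>x. \<Sum>b\<in>B. f b * b x) = Z \<Longrightarrow> \<forall>b\<in>B. f b = 0"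
    using P unfolding PB_def ga_basis_def by auto
  have nz: "b \<noteq> Z"
  proof
    assume bz: "b = Z"
    define f where "f b' = (if b' = b then (1::complex) else 0)" for b'
    have "(\<lambda>x. \<Sum>b'\<in>B. f b' * b' x) = (\<lambda>x. b x)"
    proof (rule ext)
      fix x
      have "(\<Sum>b'\<in>B. f b' * b' x) = (\<Sum>b'\<in>B. if b' = b then b x else 0)"
        by (rule sum.cong) (auto simp: f_def)
      then show "(\<Sum>b'\<in>B. f b' * b' x) = b x" using fB b by simp
    qed
    then have "(\<lambda>x. \<Sum>b'\<in>B. f b' * b' x) = Z" using bz by simp
    then have "f b = 0" using ind b by blast
    then show False by (simp add: f_def)
  qed
  have "\<forall>k\<in>K. \<exists>m. D k \<star> b = (\<lambda>x. m * b x)" using P b D_sub unfolding PB_def by blast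
  then show ?thesis unfolding eigv_def using P b sub nz unfolding PB_def by blast
qed

lemma PB_sub: assumes P: "PB B" and P': "PB B'" shows "B \<subseteq> B'"
proof
  fix b assume b: "b \<in> B"
  have eb: "eigv b" by (rule PB_eigv[OF P b])
  have "b \<in> ga_sub G K" using eb unfolding eigv_def by simp
  then obtain f where hf: "b = (\<lambda>x. \<Sum>b'\<in>B'. f b' * b' x)" using P' unfolding PB_def ga_basis_def by blast
  show "b \<in> B'"
  proof (rule ccontr)
    assume nb: "b \<notin> B'"
    have "(\<lambda>x. \<Sum>b'\<in>B'. f b' * b' x) \<star> b = (\<lambda>x. \<Sum>b'\<in>B'. f b' * (b' \<star> b) x)" by (rule gm_lin_left)
    also have "\<dots> = Z"
    proof (rule ext, rule sum.neutral, rule ballI)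
      fix b' x assume b': "b' \<in> B'"
      have "b' \<noteq> b" using b' nb by blast
      then have "b' \<star> b = Z" by (rule orth[OF PB_eigv[OF P' b'] eb])
      then show "f b' * (b' \<star> b) x = 0" by simp
    qed
    finally have "b \<star> b = Z" unfolding hf[symmetric] .
    moreover have "b \<star> b = b" using eb unfolding eigv_def by simp
    ultimately show False using eb unfolding eigv_def by simp
  qed
qed

lemma PB_exists: "PB (ech ` charsOn K)"
  unfolding PB_def ga_basis_def
proof (intro conjI ballI allI impI)
  show "finite (ech ` charsOn K)" using chars_finite by simp
  show "ech ` charsOn K \<subseteq> ga_sub G K" using ech_sub by blast
next
  fix f b assume s: "(\<lambda>x. \<Sum>b\<in>ech ` charsOn K. f b * b x) = Z" and b: "b \<in> ech ` charsOn K"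
  show "f b = 0"
  proof (rule indep[OF _ _ _ s b])
    show "finite (ech ` charsOn K)" using chars_finite by simp
    show "\<And>b. b \<in> ech ` charsOn K \<Longrightarrow> eigv b" using ech_eigv by blast
    show "\<And>b b'. b \<in> ech ` charsOn K \<Longrightarrow> b' \<in> ech ` charsOn K \<Longrightarrow> b \<noteq> b' \<Longrightarrow> b \<star> b' = Z"
      using orth ech_eigv by blast
  qed
next
  fix a assume a: "a \<in> ga_sub G K"
  define c where "c \<chi> = (\<Sum>k\<in>K. a k * (of_nat (card K) / of_nat (card (charsOn K)) * \<chi> k))" for \<chi>
  have "a = (\<lambda>x. \<Sum>\<chi>\<in>charsOn K. c \<chi> * ech \<chi> x)"
  proof (rule ext)
    fix x
    have "a x = (\<Sum>k\<in>K. a k * D k x)" using fun_cong[OF expand[OF a K_car], of x] by simp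
    also have "\<dots> = (\<Sum>k\<in>K. a k * (\<Sum>\<chi>\<in>charsOn K. (of_nat (card K) / of_nat (card (charsOn K)) * \<chi> k) * ech \<chi> x))"
    proof (rule sum.cong[OF refl])
      fix k assume k: "k \<in> K"
      show "a k * D k x = a k * (\<Sum>\<chi>\<in>charsOn K. (of_nat (card K) / of_nat (card (charsOn K)) * \<chi> k) * ech \<chi> x)"
        using fun_cong[OF delta_span[OF k], of x] by simp
    qed
    also have "\<dots> = (\<Sum>k\<in>K. \<Sum>\<chi>\<in>charsOn K. a k * ((of_nat (card K) / of_nat (card (charsOn K)) * \<chi> k) * ech \<chi> x))"
      by (simp add: sum_distrib_left)
    also have "\<dots> = (\<Sum>\<chi>\<in>charsOn K. \<Sum>k\<in>K. a k * ((of_nat (card K) / of_nat (card (charsOn K)) * \<chi> k) * ech \<chi> x))"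
      by (rule sum.swap)
    also have "\<dots> = (\<Sum>\<chi>\<in>charsOn K. c \<chi> * ech \<chi> x)"
      by (simp add: c_def sum_distrib_right mult.assoc)
    finally show "a x = (\<Sum>\<chi>\<in>charsOn K. c \<chi> * ech \<chi> x)" .
  qed
  also have "\<dots> = (\<lambda>x. \<Sum>b\<in>ech ` charsOn K. c (the_inv_into (charsOn K) ech b) * b x)"
    by (rule ext) (simp add: sum.reindex[OF ech_inj] the_inv_into_f_f[OF ech_inj])
  finally have af: "a = (\<lambda>x. \<Sum>b\<in>ech ` charsOn K. c (the_inv_into (charsOn K) ech b) * b x)" .
  show "\<exists>f. a = (\<lambda>x. \<Sum>b\<in>ech ` charsOn K. f b * b x)"
    by (rule exI[where x="\<lambda>b. c (the_inv_into (charsOn K) ech b)"], rule af)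
next
  fix b a assume b: "b \<in> ech ` charsOn K" and a: "a \<in> ga_sub G K"
  then obtain \<chi> where c: "\<chi> \<in> charsOn K" and bc: "b = ech \<chi>" by blast
  show "\<exists>\<mu>. a \<star> b = (\<lambda>x. \<mu> * b x)" unfolding bc using eig_mult[OF a ech_eig[OF c]] by blast
next
  fix b assume "b \<in> ech ` charsOn K"
  then show "b \<star> b = b" using ech_idem by blast
next
  fix b b' assume "b \<in> ech ` charsOn K" "b' \<in> ech ` charsOn K" "b \<noteq> b'"
  then show "b \<star> b' = Z" using orth ech_eigv by blast
qed

lemma idem_props: "b \<in> idem_eigenbasis G K \<Longrightarrow> eigv b"
proof -
  assume b: "b \<in> idem_eigenbasis G K"
  have ex: "\<exists>!B. PB B"
  proof (rule ex1I[of _ "ech ` charsOn K"])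
    show "PB (ech ` charsOn K)" by (rule PB_exists)
    fix B assume "PB B"
    then show "B = ech ` charsOn K" using PB_sub PB_exists by blast
  qed
  have "idem_eigenbasis G K = (THE B. PB B)" unfolding idem_eigenbasis_def PB_def ..
  then have "b \<in> (THE B. PB B)" using b by simp
  moreover have "PB (THE B. PB B)" by (rule theI'[OF ex])
  ultimately show ?thesis using PB_eigv by blast
qed

end

context fgrp begin
lemma cancel1 [simp]: "a \<in> carrier G \<Longrightarrow> b \<in> carrier G \<Longrightarrow> a \<otimes> (inv a \<otimes> b) = b"
  by (simp add: m_assoc[symmetric])
lemma cancel2 [simp]: "a \<in> carrier G \<Longrightarrow> b \<in> carrier G \<Longrightarrow> inv a \<otimes> (a \<otimes> b) = b"
  by (simp add: m_assoc[symmetric])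
end

locale mainL = fgrp G for G :: "('g, 'b) monoid_scheme" (structure) +
  fixes N H :: "'g set" and v u :: "'g \<Rightarrow> complex" and hs :: "nat \<Rightarrow> 'g"
    and Orb Ha c vs w e J A
  assumes normN: "N \<lhd> G" and subH: "subgroup H G"
    and abN: "\<forall>x\<in>N. \<forall>y\<in>N. x \<otimes> y = y \<otimes> x"
    and abH: "\<forall>x\<in>H. \<forall>y\<in>H. x \<otimes> y = y \<otimes> x"
    and sd_int: "N \<inter> H = {\<one>}"
    and sd_gen: "N <#> H = carrier G"
    and v_in: "v \<in> idem_eigenbasis G N"
    and Orb_def: "Orb = {ga_conj G h v | h. h \<in> H}"
    and Ha_def: "Ha = {h \<in> H. \<forall>x\<in>Orb. ga_conj G h x = x}"
    and c_def: "c = card Orb"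
    and u_in: "u \<in> idem_eigenbasis G Ha"
    and hs_in: "\<forall>i<c. hs i \<in> H"
    and hs_reps: "bij_betw (\<lambda>i. Ha #> hs i) {..<c} ((\<lambda>h. Ha #> h) ` H)"
    and vs_def: "vs = (\<lambda>i. ga_conj G (hs i) v)"
    and w_def: "w = (\<lambda>i. ga_mult G (vs i) u)"
    and e_def: "e = (\<lambda>i j. ga_mult G (ga_mult G (w i) (ga_delta G (hs i \<otimes> inv (hs j)))) (w j))"
    and J_def: "J = (\<lambda>x. \<Sum>i<c. w i x)"
    and A_def: "A = {ga_mult G a J | a. a \<in> ga_sub G (carrier G)}"
begin

lemma Nsub: "subgroup N G" by (rule normal_imp_subgroup[OF normN])
lemma Nc: "n \<in> N \<Longrightarrow> n \<in> carrier G" by (rule subgroup.mem_carrier[OF Nsub])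
lemma Hc: "h \<in> H \<Longrightarrow> h \<in> carrier G" by (rule subgroup.mem_carrier[OF subH])
lemma Hm: "x \<in> H \<Longrightarrow> y \<in> H \<Longrightarrow> x \<otimes> y \<in> H" by (rule subgroup.m_closed[OF subH])
lemma Hi: "x \<in> H \<Longrightarrow> inv x \<in> H" by (rule subgroup.m_inv_closed[OF subH])
lemma Hcomm: "x \<in> H \<Longrightarrow> y \<in> H \<Longrightarrow> x \<otimes> y = y \<otimes> x" using abH by blast

lemma N_abK: "abK G N"
  by (rule abK.intro[OF fgrp_axioms]) (simp add: abK_axioms_def Nsub abN)

lemma v_props: "v \<in> ga_sub G N" "v \<star> v = v" "v \<noteq> Z" "\<And>k. k \<in> N \<Longrightarrow> \<exists>m. D k \<star> v = (\<lambda>x. m * v x)"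
  using abK.idem_props[OF N_abK v_in] unfolding abK.eigv_def[OF N_abK] by auto

lemma sub_V: "a \<in> ga_sub G S \<Longrightarrow> S \<subseteq> carrier G \<Longrightarrow> a \<in> V"
  unfolding ga_sub_def by blast

lemma vV: "v \<in> V" using v_props(1) subgroup.subset[OF Nsub] by (rule sub_V)

lemma Orb_V: "x \<in> Orb \<Longrightarrow> x \<in> V"
  unfolding Orb_def using conj_V by blast

lemma Orb_I: "h \<in> H \<Longrightarrow> C h v \<in> Orb"
  unfolding Orb_def by blast

lemma Ha_H: "Ha \<subseteq> H" unfolding Ha_def by blast

lemma Ha_stab: "s \<in> Ha \<Longrightarrow> x \<in> Orb \<Longrightarrow> C s x = x" unfolding Ha_def by blast

lemma Ha_sub: "subgroup Ha G"
proof (rule subgroupI)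
  show "Ha \<subseteq> carrier G" using Ha_H Hc by blast
  have "\<one> \<in> Ha" unfolding Ha_def using subgroup.one_closed[OF subH] conj_one Orb_V by blast
  then show "Ha \<noteq> {}" by blast
next
  fix a assume a: "a \<in> Ha"
  have aH: "a \<in> H" using a Ha_H by blast
  have "C (inv a) x = x" if x: "x \<in> Orb" for x
  proof -
    have "C (inv a) x = C (inv a) (C a x)" using Ha_stab[OF a x] by simp
    also have "\<dots> = x" by (rule conj_inv[OF Hc[OF aH] Orb_V[OF x]])
    finally show ?thesis .
  qed
  then show "inv a \<in> Ha" unfolding Ha_def using Hi[OF aH] by blast
next
  fix a b assume a: "a \<in> Ha" and b: "b \<in> Ha"
  have aH: "a \<in> H" and bH: "b \<in> H" using a b Ha_H by auto
  have "C (a \<otimes> b) x = x" if x: "x \<in> Orb" for x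
  proof -
    have "C (a \<otimes> b) x = C a (C b x)" by (rule conj_comp[symmetric, OF Hc[OF aH] Hc[OF bH]])
    also have "\<dots> = x" using Ha_stab[OF a x] Ha_stab[OF b x] by simp
    finally show ?thesis .
  qed
  then show "a \<otimes> b \<in> Ha" unfolding Ha_def using Hm[OF aH bH] by blast
qed

lemma Ha_abK: "abK G Ha"
  by (rule abK.intro[OF fgrp_axioms]) (use Ha_sub Ha_H abH in \<open>auto simp: abK_axioms_def\<close>)

lemma u_props: "u \<in> ga_sub G Ha" "u \<star> u = u" "u \<noteq> Z" "\<And>k. k \<in> Ha \<Longrightarrow> \<exists>m. D k \<star> u = (\<lambda>x. m * u x)"
  using abK.idem_props[OF Ha_abK u_in] unfolding abK.eigv_def[OF Ha_abK] by auto

lemma uV: "u \<in> V" using u_props(1) subgroup.subset[OF Ha_sub] by (rule sub_V)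

lemma conj_N: assumes h: "h \<in> carrier G" and a: "a \<in> ga_sub G N" shows "C h a \<in> ga_sub G N"
  unfolding ga_sub_def
proof (intro CollectI allI impI)
  fix x assume x: "x \<notin> N"
  show "C h a x = 0"
  proof (cases "x \<in> carrier G")
    case True
    have "inv h \<otimes> x \<otimes> h \<notin> N"
    proof
      assume "inv h \<otimes> x \<otimes> h \<in> N"
      then have "h \<otimes> (inv h \<otimes> x \<otimes> h) \<otimes> inv h \<in> N" by (rule normal.inv_op_closed2[OF normN h])
      moreover have "h \<otimes> (inv h \<otimes> x \<otimes> h) \<otimes> inv h = x" using h True by (simp add: m_assoc)
      ultimately show False using x by simp
    qed
    then show ?thesis using True h a by (simp add: conj_eval ga_sub_def)
  next
    case False then show ?thesis using h by (simp add: conj_eval)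
  qed
qed

lemma V_eigv: assumes h: "h \<in> H" shows "abK.eigv G N (C h v)"
  unfolding abK.eigv_def[OF N_abK]
proof (intro conjI ballI)
  have hc: "h \<in> carrier G" by (rule Hc[OF h])
  show "C h v \<in> ga_sub G N" by (rule conj_N[OF hc v_props(1)])
  show "C h v \<star> C h v = C h v" using conj_mult[OF hc, of v v] v_props(2) by simp
  show "C h v \<noteq> Z"
  proof
    assume "C h v = Z"
    then have "C (inv h) (C h v) = C (inv h) Z" by simp
    then have "v = Z" using conj_inv[OF hc vV] conj_Z[OF inv_closed[OF hc]] by simp
    then show False using v_props(3) by simp
  qed
  fix k assume k: "k \<in> N"
  define k' where "k' = inv h \<otimes> k \<otimes> h"
  have k': "k' \<in> N" unfolding k'_def by (rule normal.inv_op_closed1[OF normN hc k])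
  obtain m where m: "D k' \<star> v = (\<lambda>x. m * v x)" using v_props(4)[OF k'] by blast
  have "C h (D k') = D (h \<otimes> k' \<otimes> inv h)" by (rule conj_D[OF hc Nc[OF k']])
  also have "h \<otimes> k' \<otimes> inv h = k" unfolding k'_def using hc Nc[OF k] by (simp add: m_assoc)
  finally have Dk: "D k = C h (D k')" by simp
  have "D k \<star> C h v = C h (D k' \<star> v)" unfolding Dk by (rule conj_mult[OF hc, symmetric])
  also have "\<dots> = (\<lambda>x. m * C h v x)" unfolding m by (rule conj_scal[OF hc])
  finally show "\<exists>m. D k \<star> C h v = (\<lambda>x. m * C h v x)" by blast
qed

lemma V_orth: "h \<in> H \<Longrightarrow> h' \<in> H \<Longrightarrow> C h v \<noteq> C h' v \<Longrightarrow> C h v \<star> C h' v = Z"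
  by (rule abK.orth[OF N_abK V_eigv V_eigv])

lemma V_idem: "h \<in> H \<Longrightarrow> C h v \<star> C h v = C h v"
  using V_eigv unfolding abK.eigv_def[OF N_abK] by blast

lemma V_swap: "g \<in> H \<Longrightarrow> h \<in> H \<Longrightarrow> D g \<star> C h v = C (g \<otimes> h) v \<star> D g"
  by (simp add: D_conj_swap Hc conj_V conj_comp)

lemma V_eq: assumes h: "h \<in> H" and h': "h' \<in> H"
  shows "C h v = C h' v \<longleftrightarrow> h \<otimes> inv h' \<in> Ha"
proof
  assume eq: "C h v = C h' v"
  define s where "s = h \<otimes> inv h'"
  have sH: "s \<in> H" unfolding s_def by (rule Hm[OF h Hi[OF h']])
  have "C s x = x" if x: "x \<in> Orb" for x
  proof -
    obtain t where t: "t \<in> H" "x = C t v" using x unfolding Orb_def by blast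
    have s2: "s = inv h' \<otimes> h" unfolding s_def by (rule Hcomm[OF h Hi[OF h']])
    have "s \<otimes> t = t \<otimes> s" by (rule Hcomm[OF sH t(1)])
    then have "s \<otimes> t = t \<otimes> (inv h' \<otimes> h)" unfolding s2[symmetric] .
    then have "C s x = C t (C (inv h') (C h v))"
      unfolding t(2) using Hc[OF t(1)] Hc[OF sH] Hc[OF h] Hc[OF h'] by (simp add: conj_comp)
    also have "\<dots> = C t v" unfolding eq using conj_inv[OF Hc[OF h'] vV] by simp
    finally show ?thesis using t by simp
  qed
  then show "h \<otimes> inv h' \<in> Ha" unfolding Ha_def s_def[symmetric] using sH by blast
next
  assume s: "h \<otimes> inv h' \<in> Ha"
  have "C (h \<otimes> inv h') (C h' v) = C h' v" by (rule Ha_stab[OF s Orb_I[OF h']])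
  moreover have "C (h \<otimes> inv h') (C h' v) = C h v"
    using Hc[OF h] Hc[OF h'] by (simp add: conj_comp m_assoc)
  ultimately show "C h v = C h' v" by simp
qed

lemma coset_eq: assumes h: "h \<in> H" and h': "h' \<in> H"
  shows "Ha #> h = Ha #> h' \<longleftrightarrow> h \<otimes> inv h' \<in> Ha"
proof
  assume eq: "Ha #> h = Ha #> h'"
  have "h \<in> Ha #> h" by (rule rcos_self[OF Hc[OF h] Ha_sub])
  then have "h \<in> Ha #> h'" using eq by simp
  then show "h \<otimes> inv h' \<in> Ha" using subgroup.rcos_module[OF Ha_sub is_group Hc[OF h'] Hc[OF h]] by simp
next
  assume "h \<otimes> inv h' \<in> Ha"
  then have "h \<in> Ha #> h'" using subgroup.rcos_module[OF Ha_sub is_group Hc[OF h'] Hc[OF h]] by simp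
  then show "Ha #> h = Ha #> h'" by (rule repr_independence[OF _ Hc[OF h'] Ha_sub, symmetric])
qed

lemma V_coset: "h \<in> H \<Longrightarrow> h' \<in> H \<Longrightarrow> C h v = C h' v \<longleftrightarrow> Ha #> h = Ha #> h'"
  using V_eq coset_eq by simp

lemma hsH: "i < c \<Longrightarrow> hs i \<in> H" using hs_in by blast

lemma vs_ne: assumes i: "i < c" and j: "j < c" and ij: "i \<noteq> j" shows "vs i \<noteq> vs j"
proof
  assume "vs i = vs j"
  then have "Ha #> hs i = Ha #> hs j" unfolding vs_def using V_coset[OF hsH[OF i] hsH[OF j]] by simp
  moreover have "inj_on (\<lambda>i. Ha #> hs i) {..<c}" using hs_reps by (rule bij_betw_imp_inj_on)
  ultimately show False using i j ij unfolding inj_on_def by blast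
qed

lemma cover: assumes h: "h \<in> H" shows "\<exists>m<c. C h v = vs m \<and> h \<otimes> inv (hs m) \<in> Ha"
proof -
  have "Ha #> h \<in> (\<lambda>i. Ha #> hs i) ` {..<c}" using hs_reps h unfolding bij_betw_def by blast
  then obtain m where m: "m < c" "Ha #> h = Ha #> hs m" by blast
  then show ?thesis unfolding vs_def using V_coset[OF h hsH[OF m(1)]] coset_eq[OF h hsH[OF m(1)]] by blast
qed

end

context fgrp begin
lemma comm_assoc: "a \<star> b = b \<star> a \<Longrightarrow> a \<star> (b \<star> w) = b \<star> (a \<star> w)"
  by (simp add: gm_assoc[symmetric])
lemma idem_assoc: "a \<star> a = a \<Longrightarrow> a \<star> (a \<star> w) = a \<star> w"
  by (simp add: gm_assoc[symmetric])
lemma swap_assoc: "a \<star> x = y \<star> a \<Longrightarrow> a \<star> (x \<star> w) = y \<star> (a \<star> w)"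
  by (simp add: gm_assoc[symmetric])
end

context mainL begin

definition E where "E i j = ga_mult G (vs i) (ga_mult G (ga_delta G (hs i \<otimes>\<^bsub>G\<^esub> inv\<^bsub>G\<^esub> (hs j))) u)"

lemma vsC: "vs i = C (hs i) v" unfolding vs_def ..

lemma hsc: "i < c \<Longrightarrow> hs i \<in> carrier G" using Hc hsH by blast

lemma gH: "i < c \<Longrightarrow> j < c \<Longrightarrow> hs i \<otimes> inv (hs j) \<in> H"
  using Hm Hi hsH by blast

lemma u_comm_V: assumes h: "h \<in> H" shows "u \<star> C h v = C h v \<star> u"
proof (rule commute_span[OF u_props(1)])
  show "Ha \<subseteq> carrier G" using Ha_H Hc by blast
  fix s assume s: "s \<in> Ha"
  have sH: "s \<in> H" using s Ha_H by blast
  have "D s \<star> C h v = C (s \<otimes> h) v \<star> D s" by (rule V_swap[OF sH h])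
  also have "C (s \<otimes> h) v = C s (C h v)" using Hc[OF sH] Hc[OF h] by (simp add: conj_comp)
  also have "\<dots> = C h v" by (rule Ha_stab[OF s Orb_I[OF h]])
  finally show "D s \<star> C h v = C h v \<star> D s" .
qed

lemma u_comm_D: assumes g: "g \<in> H" shows "u \<star> D g = D g \<star> u"
proof (rule commute_span[OF u_props(1)])
  show "Ha \<subseteq> carrier G" using Ha_H Hc by blast
  fix s assume s: "s \<in> Ha"
  have sH: "s \<in> H" using s Ha_H by blast
  have "D s \<star> D g = D (s \<otimes> g)" by (rule D_D[OF Hc[OF sH] Hc[OF g]])
  also have "s \<otimes> g = g \<otimes> s" by (rule Hcomm[OF sH g])
  also have "D (g \<otimes> s) = D g \<star> D s" by (rule D_D[OF Hc[OF g] Hc[OF sH], symmetric])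
  finally show "D s \<star> D g = D g \<star> D s" .
qed

lemma uDu: "g \<in> H \<Longrightarrow> u \<star> (D g \<star> u) = D g \<star> u"
  by (simp add: gm_assoc[symmetric] u_comm_D) (simp add: gm_assoc u_props(2))

lemma calc1: "a \<in> carrier G \<Longrightarrow> b \<in> carrier G \<Longrightarrow> a \<otimes> inv b \<otimes> b = a"
  by (simp add: m_assoc)
lemma calc2: "a \<in> carrier G \<Longrightarrow> b \<in> carrier G \<Longrightarrow> d \<in> carrier G \<Longrightarrow> a \<otimes> inv b \<otimes> (b \<otimes> inv d) = a \<otimes> inv d"
  by (simp add: m_assoc)

lemma e_E: assumes i: "i < c" and j: "j < c" shows "e i j = E i j"
proof -
  let ?g = "hs i \<otimes> inv (hs j)"
  have g: "?g \<in> H" by (rule gH[OF i j])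
  have sw: "D ?g \<star> vs j = vs i \<star> D ?g"
    unfolding vsC using V_swap[OF g hsH[OF j]] calc1[OF hsc[OF i] hsc[OF j]] by simp
  have "e i j = vs i \<star> (u \<star> (D ?g \<star> (vs j \<star> u)))" unfolding e_def w_def by (simp add: gm_assoc)
  also have "D ?g \<star> (vs j \<star> u) = vs i \<star> (D ?g \<star> u)" by (rule swap_assoc[OF sw])
  also have "u \<star> (vs i \<star> (D ?g \<star> u)) = vs i \<star> (u \<star> (D ?g \<star> u))"
    by (rule comm_assoc) (simp add: vsC u_comm_V[OF hsH[OF i]])
  also have "u \<star> (D ?g \<star> u) = D ?g \<star> u" by (rule uDu[OF g])
  also have "vs i \<star> (vs i \<star> (D ?g \<star> u)) = vs i \<star> (D ?g \<star> u)"
    by (rule idem_assoc) (simp add: vsC V_idem[OF hsH[OF i]])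
  finally show ?thesis unfolding E_def .
qed

lemma EE: assumes i: "i < c" and j: "j < c" and k: "k < c" and l: "l < c"
  shows "E i j \<star> E k l = (if j = k then E i l else Z)"
proof -
  let ?g1 = "hs i \<otimes> inv (hs j)" and ?g2 = "hs k \<otimes> inv (hs l)"
  have g1: "?g1 \<in> H" by (rule gH[OF i j])
  have g2: "?g2 \<in> H" by (rule gH[OF k l])
  let ?X = "C (?g1 \<otimes> hs k) v"
  have "E i j \<star> E k l = vs i \<star> (D ?g1 \<star> (u \<star> (vs k \<star> (D ?g2 \<star> u))))" unfolding E_def by (simp add: gm_assoc)
  also have "u \<star> (vs k \<star> (D ?g2 \<star> u)) = vs k \<star> (u \<star> (D ?g2 \<star> u))"
    by (rule comm_assoc) (simp add: vsC u_comm_V[OF hsH[OF k]])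
  also have "u \<star> (D ?g2 \<star> u) = D ?g2 \<star> u" by (rule uDu[OF g2])
  also have "D ?g1 \<star> (vs k \<star> (D ?g2 \<star> u)) = ?X \<star> (D ?g1 \<star> (D ?g2 \<star> u))"
    by (rule swap_assoc) (simp add: vsC V_swap[OF g1 hsH[OF k]])
  finally have eq: "E i j \<star> E k l = vs i \<star> (?X \<star> (D ?g1 \<star> (D ?g2 \<star> u)))" .
  show ?thesis
  proof (cases "j = k")
    case True
    have X: "?X = vs i" unfolding vsC True using calc1[OF hsc[OF i] hsc[OF k]] by simp
    have "D ?g1 \<star> (D ?g2 \<star> u) = D (?g1 \<otimes> ?g2) \<star> u" by (rule D_D_assoc[OF Hc[OF g1] Hc[OF g2]])
    also have "?g1 \<otimes> ?g2 = hs i \<otimes> inv (hs l)" unfolding True by (rule calc2[OF hsc[OF i] hsc[OF k] hsc[OF l]])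
    finally have "D ?g1 \<star> (D ?g2 \<star> u) = D (hs i \<otimes> inv (hs l)) \<star> u" .
    moreover have "vs i \<star> (vs i \<star> (D (hs i \<otimes> inv (hs l)) \<star> u)) = vs i \<star> (D (hs i \<otimes> inv (hs l)) \<star> u)"
      by (rule idem_assoc) (simp add: vsC V_idem[OF hsH[OF i]])
    ultimately show ?thesis using eq X True unfolding E_def by simp
  next
    case False
    have gk: "?g1 \<otimes> hs k \<in> H" by (rule Hm[OF g1 hsH[OF k]])
    have "?X \<noteq> vs i"
    proof
      assume Xi: "?X = vs i"
      have "?X = C ?g1 (vs k)" unfolding vsC using Hc[OF g1] hsc[OF k] by (simp add: conj_comp)
      moreover have "vs i = C ?g1 (vs j)" unfolding vsC
        using Hc[OF g1] hsc[OF j] calc1[OF hsc[OF i] hsc[OF j]] by (simp add: conj_comp)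
      ultimately have "C (inv ?g1) (C ?g1 (vs k)) = C (inv ?g1) (C ?g1 (vs j))" using Xi by simp
      then have "vs k = vs j" unfolding vsC using conj_inv[OF Hc[OF g1] conj_V] by simp
      then show False using vs_ne[OF j k False] by simp
    qed
    then have "vs i \<star> ?X = Z" unfolding vsC by (intro V_orth[OF hsH[OF i] gk]) (simp add: vsC)
    then show ?thesis using eq False by (simp add: gm_assoc[symmetric])
  qed
qed

lemma prod_eval:
  assumes a: "a \<in> ga_sub G N" and b: "b \<in> ga_sub G Ha" and n: "n \<in> N" and s: "s \<in> Ha"
  shows "(a \<star> b) (n \<otimes> s) = a n * b s"
proof -
  have sH: "s \<in> H" using s Ha_H by blast
  have nc: "n \<in> carrier G" by (rule Nc[OF n])
  have sc: "s \<in> carrier G" by (rule Hc[OF sH])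
  have x: "n \<otimes> s \<in> carrier G" using nc sc by simp
  have "(a \<star> b) (n \<otimes> s) = (\<Sum>y\<in>carrier G. a y * b (inv y \<otimes> (n \<otimes> s)))" by (rule gm_in[OF x])
  also have "\<dots> = (\<Sum>y\<in>carrier G. if y = n then a n * b s else 0)"
  proof (rule sum.cong[OF refl])
    fix y assume y: "y \<in> carrier G"
    show "a y * b (inv y \<otimes> (n \<otimes> s)) = (if y = n then a n * b s else 0)"
    proof (cases "y = n")
      case True then show ?thesis using nc sc by simp
    next
      case False
      show ?thesis
      proof (cases "y \<in> N")
        case False then show ?thesis using a \<open>y \<noteq> n\<close> by (simp add: ga_sub_def)
      next
        case yN: True
        have "inv y \<otimes> (n \<otimes> s) \<notin> Ha"
        proof
          assume h: "inv y \<otimes> (n \<otimes> s) \<in> Ha"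
          have "(inv y \<otimes> (n \<otimes> s)) \<otimes> inv s \<in> Ha"
            by (rule subgroup.m_closed[OF Ha_sub h subgroup.m_inv_closed[OF Ha_sub s]])
          moreover have "(inv y \<otimes> (n \<otimes> s)) \<otimes> inv s = inv y \<otimes> n" using y nc sc by (simp add: m_assoc)
          ultimately have t1: "inv y \<otimes> n \<in> H" using Ha_H by auto
          have t2: "inv y \<otimes> n \<in> N" by (rule subgroup.m_closed[OF Nsub subgroup.m_inv_closed[OF Nsub yN] n])
          have "inv y \<otimes> n = \<one>" using t1 t2 sd_int by blast
          have "n = y \<otimes> (inv y \<otimes> n)" using y nc by simp
          also have "\<dots> = y" using \<open>inv y \<otimes> n = \<one>\<close> y by simp
          finally show False using False by simp
        qed
        then show ?thesis using b False by (simp add: ga_sub_def)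
      qed
    qed
  qed
  also have "\<dots> = a n * b s" using nc fin by (simp add: sum.delta')
  finally show ?thesis .
qed

lemma vs_sub: "i < c \<Longrightarrow> vs i \<in> ga_sub G N"
  unfolding vsC by (rule conj_N[OF hsc v_props(1)])

lemma Eii: "i < c \<Longrightarrow> E i i = vs i \<star> u"
  unfolding E_def using hsc uV by (simp add: D_one_left)

lemma E_nz: assumes i: "i < c" and j: "j < c" shows "E i j \<noteq> Z"
proof
  assume ez: "E i j = Z"
  have "E i j \<star> E j i = E i i" using EE[OF i j j i] by simp
  then have eii: "E i i = Z" using ez by simp
  obtain n where n: "vs i n \<noteq> 0" using V_eigv[OF hsH[OF i]] unfolding abK.eigv_def[OF N_abK] vsC by auto
  have nN: "n \<in> N" using n vs_sub[OF i] unfolding ga_sub_def by blast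
  obtain s where s: "u s \<noteq> 0" using u_props(3) by auto
  have sHa: "s \<in> Ha" using s u_props(1) unfolding ga_sub_def by blast
  have "(vs i \<star> u) (n \<otimes> s) = vs i n * u s" by (rule prod_eval[OF vs_sub[OF i] u_props(1) nN sHa])
  then have "(vs i \<star> u) (n \<otimes> s) \<noteq> 0" using n s by simp
  then show False using eii Eii[OF i] by simp
qed

end

context mainL begin

definition psi :: "complex mat \<Rightarrow> 'g \<Rightarrow> complex" where
  "psi M = (\<lambda>x. \<Sum>i<c. \<Sum>j<c. M $$ (i,j) * E i j x)"

lemma E_out: "x \<notin> carrier G \<Longrightarrow> E i j x = 0"
  unfolding E_def by (rule gm_out)

lemma psi_V: "psi M \<in> V"
  unfolding ga_sub_def psi_def by (simp add: E_out)

lemma lin2_left: "(\<lambda>x. \<Sum>i\<in>I. \<Sum>j\<in>I'. m i j * f i j x) \<star> b = (\<lambda>x. \<Sum>i\<in>I. \<Sum>j\<in>I'. m i j * (f i j \<star> b) x)"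
  by (simp add: gm_sum_left gm_scal_left)

lemma lin2_right: "b \<star> (\<lambda>x. \<Sum>i\<in>I. \<Sum>j\<in>I'. m i j * f i j x) = (\<lambda>x. \<Sum>i\<in>I. \<Sum>j\<in>I'. m i j * (b \<star> f i j) x)"
  by (simp add: gm_sum_right gm_scal_right)

lemma E_psi: assumes i: "i < c" and j: "j < c"
  shows "E i j \<star> psi M = (\<lambda>x. \<Sum>l<c. M $$ (j,l) * E i l x)"
proof -
  have "E i j \<star> psi M = (\<lambda>x. \<Sum>k<c. \<Sum>l<c. M $$ (k,l) * (E i j \<star> E k l) x)"
    unfolding psi_def by (rule lin2_right)
  also have "\<dots> = (\<lambda>x. \<Sum>k<c. if k = j then (\<Sum>l<c. M $$ (k,l) * E i l x) else 0)"
  proof (rule ext, rule sum.cong[OF refl])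
    fix x k assume k: "k \<in> {..<c}"
    show "(\<Sum>l<c. M $$ (k,l) * (E i j \<star> E k l) x) = (if k = j then (\<Sum>l<c. M $$ (k,l) * E i l x) else 0)"
      by (rule trans[OF sum.cong[OF refl]], rule arg_cong[where f="\<lambda>y. M $$ (k, _) * y"])
         (use EE[OF i j] k in \<open>auto simp: if_distrib\<close>)
  qed
  also have "\<dots> = (\<lambda>x. \<Sum>l<c. M $$ (j,l) * E i l x)" using j by (simp add: sum.delta')
  finally show ?thesis .
qed

lemma sumE_E: assumes i: "i < c" and j: "j < c" and k: "k < c"
  shows "(\<lambda>x. \<Sum>l<c. a l * E i l x) \<star> E j k = (\<lambda>x. a j * E i k x)"
proof -
  have "(\<lambda>x. \<Sum>l<c. a l * E i l x) \<star> E j k = (\<lambda>x. \<Sum>l<c. a l * (E i l \<star> E j k) x)" by (rule gm_lin_left)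
  also have "\<dots> = (\<lambda>x. \<Sum>l<c. if l = j then a j * E i k x else 0)"
  proof (rule ext, rule sum.cong[OF refl])
    fix x l assume l: "l \<in> {..<c}"
    show "a l * (E i l \<star> E j k) x = (if l = j then a j * E i k x else 0)"
      using EE[OF i _ j k, of l] l by auto
  qed
  also have "\<dots> = (\<lambda>x. a j * E i k x)" using j by (simp add: sum.delta')
  finally show ?thesis .
qed

lemma psi_E: assumes k: "k < c" and l: "l < c"
  shows "psi M \<star> E k l = (\<lambda>x. \<Sum>i<c. M $$ (i,k) * E i l x)"
proof -
  have "psi M \<star> E k l = (\<lambda>x. \<Sum>i<c. \<Sum>j<c. M $$ (i,j) * (E i j \<star> E k l) x)"
    unfolding psi_def by (rule lin2_left)
  also have "\<dots> = (\<lambda>x. \<Sum>i<c. M $$ (i,k) * E i l x)"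
  proof (rule ext, rule sum.cong[OF refl])
    fix x i assume i: "i \<in> {..<c}"
    have "(\<Sum>j<c. M $$ (i,j) * (E i j \<star> E k l) x) = (\<Sum>j<c. if j = k then M $$ (i,k) * E i l x else 0)"
      by (rule sum.cong[OF refl]) (use EE[OF _ _ k l] i in auto)
    also have "\<dots> = M $$ (i,k) * E i l x" using k by (simp add: sum.delta')
    finally show "(\<Sum>j<c. M $$ (i,j) * (E i j \<star> E k l) x) = M $$ (i,k) * E i l x" .
  qed
  finally show ?thesis .
qed

lemma J_E: "J = (\<lambda>x. \<Sum>k<c. E k k x)"
  unfolding J_def w_def by (rule ext, rule sum.cong[OF refl]) (simp add: Eii)

lemma psi_J: "psi M \<star> J = psi M"
proof -
  have "psi M \<star> J = (\<lambda>x. \<Sum>k<c. (psi M \<star> E k k) x)" unfolding J_E by (rule gm_sum_right)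
  also have "\<dots> = (\<lambda>x. \<Sum>k<c. \<Sum>i<c. M $$ (i,k) * E i k x)"
    by (rule ext, rule sum.cong[OF refl]) (simp add: psi_E)
  also have "\<dots> = psi M" unfolding psi_def by (rule ext, rule sum.swap)
  finally show ?thesis .
qed

lemma psi_mult: assumes A: "M \<in> carrier_mat c c" and B: "M' \<in> carrier_mat c c"
  shows "psi M \<star> psi M' = psi (M * M')"
proof -
  have "psi M \<star> psi M' = (\<lambda>x. \<Sum>i<c. \<Sum>j<c. M $$ (i,j) * (E i j \<star> psi M') x)"
    unfolding psi_def[of M] by (rule lin2_left)
  also have "\<dots> = (\<lambda>x. \<Sum>i<c. \<Sum>j<c. M $$ (i,j) * (\<Sum>l<c. M' $$ (j,l) * E i l x))"
    by (rule ext, rule sum.cong[OF refl], rule sum.cong[OF refl]) (simp add: E_psi)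
  also have "\<dots> = (\<lambda>x. \<Sum>i<c. \<Sum>l<c. (\<Sum>j<c. M $$ (i,j) * M' $$ (j,l)) * E i l x)"
  proof (rule ext, rule sum.cong[OF refl])
    fix x i
    show "(\<Sum>j<c. M $$ (i,j) * (\<Sum>l<c. M' $$ (j,l) * E i l x)) = (\<Sum>l<c. (\<Sum>j<c. M $$ (i,j) * M' $$ (j,l)) * E i l x)"
    proof -
      have "(\<Sum>j<c. M $$ (i,j) * (\<Sum>l<c. M' $$ (j,l) * E i l x)) = (\<Sum>j<c. \<Sum>l<c. M $$ (i,j) * (M' $$ (j,l) * E i l x))"
        by (simp add: sum_distrib_left)
      also have "\<dots> = (\<Sum>l<c. \<Sum>j<c. M $$ (i,j) * (M' $$ (j,l) * E i l x))" by (rule sum.swap)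
      also have "\<dots> = (\<Sum>l<c. (\<Sum>j<c. M $$ (i,j) * M' $$ (j,l)) * E i l x)"
        by (simp add: sum_distrib_right mult.assoc)
      finally show ?thesis .
    qed
  qed
  also have "\<dots> = psi (M * M')"
    unfolding psi_def
  proof (rule ext, rule sum.cong[OF refl], rule sum.cong[OF refl])
    fix x i l assume i: "i \<in> {..<c}" and l: "l \<in> {..<c}"
    have "(M * M') $$ (i,l) = row M i \<bullet> col M' l" using A B i l by simp
    also have "\<dots> = (\<Sum>j<c. M $$ (i,j) * M' $$ (j,l))"
      unfolding scalar_prod_def using A B i l by (simp add: lessThan_atLeast0)
    finally show "(\<Sum>j<c. M $$ (i,j) * M' $$ (j,l)) * E i l x = (M * M') $$ (i,l) * E i l x" by simp
  qed
  finally show ?thesis .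
qed

lemma psi_add: assumes A: "M \<in> carrier_mat c c" and B: "M' \<in> carrier_mat c c"
  shows "psi (M + M') = (\<lambda>x. psi M x + psi M' x)"
  unfolding psi_def using A B by (simp add: sum.distrib distrib_right)

lemma psi_smult: assumes A: "M \<in> carrier_mat c c"
  shows "psi (s \<cdot>\<^sub>m M) = (\<lambda>x. s * psi M x)"
  unfolding psi_def using A by (simp add: sum_distrib_left mult.assoc)

lemma psi_zero: "psi (0\<^sub>m c c) = Z"
  unfolding psi_def by simp

lemma psi_elem: assumes i: "i < c" and j: "j < c" shows "psi (elem_mat c i j) = E i j"
proof (rule ext)
  fix x
  have "psi (elem_mat c i j) x = (\<Sum>k<c. \<Sum>l<c. (if k = i \<and> l = j then E k l x else 0))"
    unfolding psi_def elem_mat_def by (rule sum.cong[OF refl], rule sum.cong[OF refl]) auto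
  also have "\<dots> = (\<Sum>k<c. if k = i then E k j x else 0)"
    by (rule sum.cong[OF refl]) (use j in \<open>simp add: sum.delta'\<close>)
  also have "\<dots> = E i j x" using i by (simp add: sum.delta')
  finally show "psi (elem_mat c i j) x = E i j x" .
qed

lemma coef: assumes i: "i < c" and j: "j < c"
  shows "(E i i \<star> psi M) \<star> E j j = (\<lambda>x. M $$ (i,j) * E i j x)"
  unfolding E_psi[OF i i] by (rule sumE_E[OF i j j])

lemma psi_inj: "inj_on psi (carrier_mat c c)"
proof (rule inj_onI)
  fix M M' assume M: "M \<in> carrier_mat c c" and M': "M' \<in> carrier_mat c c" and eq: "psi M = psi M'"
  show "M = M'"
  proof (rule eq_matI)
    fix i j assume "i < dim_row M'" "j < dim_col M'"
    then have i: "i < c" and j: "j < c" using M' by auto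
    have "(\<lambda>x. M $$ (i,j) * E i j x) = (\<lambda>x. M' $$ (i,j) * E i j x)"
      using coef[OF i j, of M] coef[OF i j, of M'] eq by simp
    moreover obtain x where "E i j x \<noteq> 0" using E_nz[OF i j] by auto
    ultimately show "M $$ (i,j) = M' $$ (i,j)" by (metis mult_cancel_right)
  qed (use M M' in auto)
qed

lemma R_sum:
  assumes "finite I" "\<And>i. i \<in> I \<Longrightarrow> f i \<in> psi ` carrier_mat c c"
  shows "(\<lambda>x. \<Sum>i\<in>I. s i * f i x) \<in> psi ` carrier_mat c c"
  using assms
proof (induction I rule: finite_induct)
  case empty
  have "(\<lambda>x. \<Sum>i\<in>{}. s i * f i x) = psi (0\<^sub>m c c)" using psi_zero by simp
  then show ?case by (rule image_eqI) simp
next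
  case (insert a I)
  have fa: "f a \<in> psi ` carrier_mat c c" by (rule insert.prems) simp
  obtain M where M: "f a = psi M" "M \<in> carrier_mat c c" using fa by (rule imageE)
  have IH: "(\<lambda>x. \<Sum>i\<in>I. s i * f i x) \<in> psi ` carrier_mat c c" by (rule insert.IH, rule insert.prems) simp
  obtain M' where M': "(\<lambda>x. \<Sum>i\<in>I. s i * f i x) = psi M'" "M' \<in> carrier_mat c c" using IH by (rule imageE)
  have "(\<lambda>x. \<Sum>i\<in>insert a I. s i * f i x) = (\<lambda>x. s a * f a x + (\<Sum>i\<in>I. s i * f i x))"
    using insert.hyps by simp
  also have "\<dots> = (\<lambda>x. psi (s a \<cdot>\<^sub>m M) x + psi M' x)"
    using fun_cong[OF M'(1)] by (simp add: M(1) psi_smult[OF M(2)])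
  also have "\<dots> = psi (s a \<cdot>\<^sub>m M + M')" using psi_add[OF smult_carrier_mat[OF M(2)] M'(2)] by simp
  finally show ?case using M(2) M'(2) by (intro image_eqI[where x="s a \<cdot>\<^sub>m M + M'"]) simp_all
qed

lemma DgE: assumes g: "g \<in> carrier G" and k: "k < c"
  shows "\<exists>\<mu> m. m < c \<and> D g \<star> E k k = (\<lambda>x. \<mu> * E m k x)"
proof -
  obtain n h where n: "n \<in> N" and h: "h \<in> H" and gnh: "g = n \<otimes> h"
    using g sd_gen unfolding set_mult_def by blast
  have hk: "h \<otimes> hs k \<in> H" by (rule Hm[OF h hsH[OF k]])
  obtain m where m: "m < c" "C (h \<otimes> hs k) v = vs m" "(h \<otimes> hs k) \<otimes> inv (hs m) \<in> Ha"
    using cover[OF hk] by blast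
  define s where "s = (h \<otimes> hs k) \<otimes> inv (hs m)"
  have sHa: "s \<in> Ha" unfolding s_def by (rule m(3))
  have sH: "s \<in> H" using sHa Ha_H by blast
  let ?gm = "hs m \<otimes> inv (hs k)"
  have gmH: "?gm \<in> H" by (rule gH[OF m(1) k])
  have hs: "h = s \<otimes> ?gm" unfolding s_def using Hc[OF h] hsc[OF k] hsc[OF m(1)] by (simp add: m_assoc)
  obtain \<mu>1 where mu1: "D n \<star> vs m = (\<lambda>x. \<mu>1 * vs m x)"
    using V_eigv[OF hsH[OF m(1)]] n unfolding abK.eigv_def[OF N_abK] vsC by blast
  obtain \<mu>2 where mu2: "D s \<star> u = (\<lambda>x. \<mu>2 * u x)" using u_props(4)[OF sHa] by blast
  have "D h \<star> u = D ?gm \<star> (D s \<star> u)"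
  proof -
    have "D h = D s \<star> D ?gm" unfolding hs by (rule D_D[OF Hc[OF sH] Hc[OF gmH], symmetric])
    also have "\<dots> = D (s \<otimes> ?gm)" by (rule D_D[OF Hc[OF sH] Hc[OF gmH]])
    also have "s \<otimes> ?gm = ?gm \<otimes> s" by (rule Hcomm[OF sH gmH])
    also have "D (?gm \<otimes> s) = D ?gm \<star> D s" by (rule D_D[OF Hc[OF gmH] Hc[OF sH], symmetric])
    finally show ?thesis by (simp add: gm_assoc)
  qed
  also have "\<dots> = (\<lambda>x. \<mu>2 * (D ?gm \<star> u) x)" unfolding mu2 by (rule gm_scal_right)
  finally have Dhu: "D h \<star> u = (\<lambda>x. \<mu>2 * (D ?gm \<star> u) x)" .
  have "D g \<star> E k k = D n \<star> (D h \<star> (vs k \<star> u))"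
    unfolding gnh Eii[OF k] by (rule D_D_assoc[OF Nc[OF n] Hc[OF h], symmetric])
  also have "D h \<star> (vs k \<star> u) = vs m \<star> (D h \<star> u)"
    by (rule swap_assoc) (simp add: vsC V_swap[OF h hsH[OF k]] m(2)[unfolded vsC])
  also have "D n \<star> (vs m \<star> (D h \<star> u)) = (\<lambda>x. \<mu>1 * (vs m \<star> (D h \<star> u)) x)"
    by (simp add: gm_assoc[symmetric] mu1 gm_scal_left)
  also have "\<dots> = (\<lambda>x. (\<mu>1 * \<mu>2) * E m k x)"
    unfolding Dhu E_def by (simp add: gm_scal_right mult.assoc)
  finally show ?thesis using m(1) by blast
qed

lemma psi_range: "psi ` carrier_mat c c = A"
proof
  show "psi ` carrier_mat c c \<subseteq> A"
  proof
    fix y assume "y \<in> psi ` carrier_mat c c"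
    then obtain M where "y = psi M" by blast
    then have "y = ga_mult G y J" using psi_J by simp
    then show "y \<in> A" unfolding A_def using psi_V \<open>y = psi M\<close> by blast
  qed
next
  show "A \<subseteq> psi ` carrier_mat c c"
  proof
    fix y assume "y \<in> A"
    then obtain a where a: "a \<in> V" "y = a \<star> J" unfolding A_def by blast
    have DJ: "D g \<star> J \<in> psi ` carrier_mat c c" if g: "g \<in> carrier G" for g
    proof -
      have "D g \<star> J = (\<lambda>x. \<Sum>k<c. 1 * (D g \<star> E k k) x)" unfolding J_E by (simp add: gm_sum_right)
      also have "\<dots> \<in> psi ` carrier_mat c c"
      proof (rule R_sum)
        fix k assume "k \<in> {..<c}"
        then have k: "k < c" by simp
        obtain \<mu> m where m: "m < c" "D g \<star> E k k = (\<lambda>x. \<mu> * E m k x)" using DgE[OF g k] by blast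
        have "psi (\<mu> \<cdot>\<^sub>m elem_mat c m k) = (\<lambda>x. \<mu> * psi (elem_mat c m k) x)"
          by (rule psi_smult) (simp add: elem_mat_def)
        then have "D g \<star> E k k = psi (\<mu> \<cdot>\<^sub>m elem_mat c m k)"
          unfolding m(2) psi_elem[OF m(1) k] by simp
        moreover have "\<mu> \<cdot>\<^sub>m elem_mat c m k \<in> carrier_mat c c" unfolding elem_mat_def by simp
        ultimately show "D g \<star> E k k \<in> psi ` carrier_mat c c" by blast
      qed simp
      finally show ?thesis .
    qed
    have ea: "(\<lambda>x. \<Sum>g\<in>carrier G. a g * D g x) = a" using expand[OF a(1) subset_refl] by (rule sym)
    have "y = (\<lambda>x. \<Sum>g\<in>carrier G. a g * D g x) \<star> J" unfolding ea a(2) ..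
    also have "\<dots> = (\<lambda>x. \<Sum>g\<in>carrier G. a g * (D g \<star> J) x)" by (rule gm_lin_left)
    also have "\<dots> \<in> psi ` carrier_mat c c" by (rule R_sum[OF fin DJ])
    finally show "y \<in> psi ` carrier_mat c c" .
  qed
qed

end

context mainL begin

lemma main_concl:
  shows "(\<forall>i<c. \<forall>j<c. \<forall>k<c. ga_mult G (e i j) (e j k) = e i k)
       \<and> (\<forall>i<c. \<forall>j<c. \<forall>k<c. \<forall>l<c. j \<noteq> k \<longrightarrow> ga_mult G (e i j) (e k l) = (\<lambda>x. 0))
       \<and> (\<exists>\<phi>. bij_betw \<phi> A (carrier_mat c c)
             \<and> (\<forall>a\<in>A. \<forall>b\<in>A. \<phi> (\<lambda>x. a x + b x) = \<phi> a + \<phi> b)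
             \<and> (\<forall>s. \<forall>a\<in>A. \<phi> (\<lambda>x. s * a x) = s \<cdot>\<^sub>m \<phi> a)
             \<and> (\<forall>a\<in>A. \<forall>b\<in>A. \<phi> (ga_mult G a b) = \<phi> a * \<phi> b)
             \<and> (\<forall>i<c. \<forall>j<c. e i j \<in> A \<and> \<phi> (e i j) = elem_mat c i j))"
proof (intro conjI allI impI)
  fix i j k assume i: "i < c" and j: "j < c" and k: "k < c"
  show "e i j \<star> e j k = e i k" using EE[OF i j j k] by (simp add: e_E i j k)
next
  fix i j k l assume i: "i < c" and j: "j < c" and k: "k < c" and l: "l < c" and jk: "j \<noteq> k"
  show "e i j \<star> e k l = Z" using EE[OF i j k l] jk by (simp add: e_E i j k l)
next
  define \<phi> where "\<phi> = the_inv_into (carrier_mat c c) psi"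
  have bij: "bij_betw psi (carrier_mat c c) A" unfolding bij_betw_def using psi_inj psi_range by blast
  have inv: "\<phi> (psi M) = M" if "M \<in> carrier_mat c c" for M
    unfolding \<phi>_def by (rule the_inv_into_f_f[OF psi_inj that])
  have rep: "\<exists>M\<in>carrier_mat c c. a = psi M" if "a \<in> A" for a
    using that psi_range by blast
  show "\<exists>\<phi>. bij_betw \<phi> A (carrier_mat c c)
             \<and> (\<forall>a\<in>A. \<forall>b\<in>A. \<phi> (\<lambda>x. a x + b x) = \<phi> a + \<phi> b)
             \<and> (\<forall>s. \<forall>a\<in>A. \<phi> (\<lambda>x. s * a x) = s \<cdot>\<^sub>m \<phi> a)
             \<and> (\<forall>a\<in>A. \<forall>b\<in>A. \<phi> (ga_mult G a b) = \<phi> a * \<phi> b)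
             \<and> (\<forall>i<c. \<forall>j<c. e i j \<in> A \<and> \<phi> (e i j) = elem_mat c i j)"
  proof (rule exI[of _ \<phi>], intro conjI ballI allI impI)
    show "bij_betw \<phi> A (carrier_mat c c)" unfolding \<phi>_def by (rule bij_betw_the_inv_into[OF bij])
  next
    fix a b assume a: "a \<in> A" and b: "b \<in> A"
    obtain M where M: "M \<in> carrier_mat c c" "a = psi M" using rep[OF a] by blast
    obtain M' where M': "M' \<in> carrier_mat c c" "b = psi M'" using rep[OF b] by blast
    show "\<phi> (\<lambda>x. a x + b x) = \<phi> a + \<phi> b"
      unfolding M(2) M'(2) psi_add[OF M(1) M'(1), symmetric] using M(1) M'(1) by (simp add: inv)
    show "\<phi> (a \<star> b) = \<phi> a * \<phi> b"
      unfolding M(2) M'(2) psi_mult[OF M(1) M'(1)] using M(1) M'(1) by (simp add: inv)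
  next
    fix s a assume a: "a \<in> A"
    obtain M where M: "M \<in> carrier_mat c c" "a = psi M" using rep[OF a] by blast
    show "\<phi> (\<lambda>x. s * a x) = s \<cdot>\<^sub>m \<phi> a"
      unfolding M(2) psi_smult[OF M(1), symmetric] using M(1) by (simp add: inv)
  next
    fix i j assume i: "i < c" and j: "j < c"
    have em: "elem_mat c i j \<in> carrier_mat c c" unfolding elem_mat_def by simp
    have eq: "e i j = psi (elem_mat c i j)" by (simp add: e_E[OF i j] psi_elem[OF i j])
    show "e i j \<in> A" unfolding eq psi_range[symmetric] using em by blast
    show "\<phi> (e i j) = elem_mat c i j" unfolding eq by (rule inv[OF em])
  qed
qed

end

theorem mainTheorem11:
  fixes G :: "('g, 'b) monoid_scheme"
    and N H :: "'g set"
    and v u :: "'g \<Rightarrow> complex"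
    and hs :: "nat \<Rightarrow> 'g"
  assumes grp: "group G"
    and fin: "finite (carrier G)"
    and normN: "N \<lhd> G"
    and subH: "subgroup H G"
    and abN: "\<forall>x\<in>N. \<forall>y\<in>N. x \<otimes>\<^bsub>G\<^esub> y = y \<otimes>\<^bsub>G\<^esub> x"
    and abH: "\<forall>x\<in>H. \<forall>y\<in>H. x \<otimes>\<^bsub>G\<^esub> y = y \<otimes>\<^bsub>G\<^esub> x"
    and sd_int: "N \<inter> H = {\<one>\<^bsub>G\<^esub>}"
    and sd_gen: "N <#>\<^bsub>G\<^esub> H = carrier G"
    and v_in: "v \<in> idem_eigenbasis G N"
  defines "Orb \<equiv> {ga_conj G h v | h. h \<in> H}"
  defines "H\<alpha> \<equiv> {h \<in> H. \<forall>x\<in>Orb. ga_conj G h x = x}"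
  defines "c \<equiv> card Orb"
  assumes u_in: "u \<in> idem_eigenbasis G H\<alpha>"
    and hs_in: "\<forall>i<c. hs i \<in> H"
    and hs_reps: "bij_betw (\<lambda>i. H\<alpha> #>\<^bsub>G\<^esub> hs i) {..<c} ((\<lambda>h. H\<alpha> #>\<^bsub>G\<^esub> h) ` H)"
  defines "vs \<equiv> (\<lambda>i. ga_conj G (hs i) v)"
  defines "w \<equiv> (\<lambda>i. ga_mult G (vs i) u)"
  defines "e \<equiv> (\<lambda>i j. ga_mult G (ga_mult G (w i) (ga_delta G (hs i \<otimes>\<^bsub>G\<^esub> inv\<^bsub>G\<^esub> (hs j)))) (w j))"
  defines "J \<equiv> (\<lambda>x. \<Sum>i<c. w i x)"
  defines "A \<equiv> {ga_mult G a J | a. a \<in> ga_sub G (carrier G)}"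
  shows "(\<forall>i<c. \<forall>j<c. \<forall>k<c. ga_mult G (e i j) (e j k) = e i k)
       \<and> (\<forall>i<c. \<forall>j<c. \<forall>k<c. \<forall>l<c. j \<noteq> k \<longrightarrow> ga_mult G (e i j) (e k l) = (\<lambda>x. 0))
       \<and> (\<exists>\<phi>. bij_betw \<phi> A (carrier_mat c c)
             \<and> (\<forall>a\<in>A. \<forall>b\<in>A. \<phi> (\<lambda>x. a x + b x) = \<phi> a + \<phi> b)
             \<and> (\<forall>s. \<forall>a\<in>A. \<phi> (\<lambda>x. s * a x) = s \<cdot>\<^sub>m \<phi> a)
             \<and> (\<forall>a\<in>A. \<forall>b\<in>A. \<phi> (ga_mult G a b) = \<phi> a * \<phi> b)
             \<and> (\<forall>i<c. \<forall>j<c. e i j \<in> A \<and> \<phi> (e i j) = elem_mat c i j))"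
proof -
  have F: "fgrp G" by (rule fgrp.intro[OF grp]) (simp add: fgrp_axioms_def fin)
  have M: "mainL G N H v u hs Orb H\<alpha> c vs w e J A"
    by (rule mainL.intro[OF F], unfold mainL_axioms_def)
       (use normN subH abN abH sd_int sd_gen v_in u_in hs_in hs_reps in
        \<open>simp add: Orb_def H\<alpha>_def c_def vs_def w_def e_def J_def A_def\<close>)
  show ?thesis by (rule mainL.main_concl[OF M])
qed

end
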